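(* Let $P_0=(|P_0|,\preccurlyeq_0)$ be a finite poset with $|P_0|=\{x_1,\dots,x_{m_0}\}$, let $i_0\in\{1,\dots,m_0\}$, and fix nonnegative integer values $m_i$ for all $i\ne i_0$. Let $D=\sum m_i$, the sum over those $i\ne i_0$ such that $x_i$ is $\preccurlyeq_0$-incomparable with $x_{i_0}$. Regard $L_\pm(P_0;m_1,\dots,m_{m_0})$ as functions of the nonnegative integer $m_{i_0}$. Then: (a) there is a polynomial $f\in\mathbb{Q}[t]$ of degree exactly $D$ with $L_+(P_0;m_1,\dots,m_{m_0})=f(m_{i_0})$ for all $m_{i_0}\ge0$; (b) there are polynomials $g_0,g_1\in\mathbb{Q}[t]$, each of degree at most $\lfloor D/2\rfloor$ (or zero), such that $L_-(P_0;m_1,\dots,m_{m_0})=g_0(m_{i_0})$ for all even $m_{i_0}\ge0$ and $=g_1(m_{i_0})$ for all odd $m_{i_0}\ge 1$.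
   Context: For nonnegative integers $m_1,\dots,m_{m_0}$ let $C_1,\dots,C_{m_0}$ be pairwise disjoint chains, $C_i$ being $x_{i,1}<\dots<x_{i,m_i}$. The lexicographic sum $P=P_0*(C_1,\dots,C_{m_0})$ is the poset on $\bigcup_i|C_i|$ with $x_{i,j}\preccurlyeq x_{i',j'}$ iff either $i\ne i'$ and $x_i\preccurlyeq_0x_{i'}$, or $i=i'$ and $j\le j'$. A linearization is a total order refining $\preccurlyeq$; relative to the reference ordering $x_{1,1},\dots,x_{1,m_1},x_{2,1},\dots,x_{m_0,m_{m_0}}$ of $|P|$, a linearization listing the elements as the reference ordering permuted by $\sigma$ is even or odd according to the parity of $\sigma$. $L_+(P_0;m_1,\dots,m_{m_0})$ is the number of linearizations of $P$, and $L_-(P_0;m_1,\dots,m_{m_0})$ is the number of even minus the number of odd linearizations of $P$. *)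

theory Defs
  imports "HOL-Combinatorics.Permutations" "HOL-Computational_Algebra.Polynomial"
begin

text \<open>The poset P0 lives on the index set {1..m0} with order relation le0.
  Element x_{i,j} of the lexicographic sum is represented by the pair (i,j).\<close>

definition lexsum_le :: "(nat \<Rightarrow> nat \<Rightarrow> bool) \<Rightarrow> nat \<times> nat \<Rightarrow> nat \<times> nat \<Rightarrow> bool" where
  "lexsum_le le0 a b \<longleftrightarrow>
     (fst a \<noteq> fst b \<and> le0 (fst a) (fst b)) \<or> (fst a = fst b \<and> snd a \<le> snd b)"

definition ref_order :: "nat \<Rightarrow> (nat \<Rightarrow> nat) \<Rightarrow> (nat \<times> nat) list" where
  "ref_order m0 m = concat (map (\<lambda>i. map (\<lambda>j. (i, j)) [1..<m i + 1]) [1..<m0 + 1])"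

text \<open>A linearization is the reference ordering permuted by sigma, i.e. the list whose
  k-th entry is (ref_order m0 m) ! (sigma k), refining the order of the lexicographic sum.\<close>
definition is_linearization ::
  "(nat \<Rightarrow> nat \<Rightarrow> bool) \<Rightarrow> nat \<Rightarrow> (nat \<Rightarrow> nat) \<Rightarrow> (nat \<Rightarrow> nat) \<Rightarrow> bool" where
  "is_linearization le0 m0 m \<sigma> \<longleftrightarrow>
     (let r = ref_order m0 m; N = length r in
       \<sigma> permutes {..<N} \<and>
       (\<forall>k<N. \<forall>l<N. lexsum_le le0 (r ! \<sigma> k) (r ! \<sigma> l) \<longrightarrow> k \<le> l))"

definition L_plus :: "(nat \<Rightarrow> nat \<Rightarrow> bool) \<Rightarrow> nat \<Rightarrow> (nat \<Rightarrow> nat) \<Rightarrow> nat" where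
  "L_plus le0 m0 m = card {\<sigma>. is_linearization le0 m0 m \<sigma>}"

definition L_minus :: "(nat \<Rightarrow> nat \<Rightarrow> bool) \<Rightarrow> nat \<Rightarrow> (nat \<Rightarrow> nat) \<Rightarrow> int" where
  "L_minus le0 m0 m = (\<Sum>\<sigma>\<in>{\<sigma>. is_linearization le0 m0 m \<sigma>}. sign \<sigma>)"

end

theory Submission
  imports Defs "HOL-Library.Product_Lexorder"
begin

fun before :: "'a list \<Rightarrow> 'a \<Rightarrow> 'a \<Rightarrow> bool" where
  "before [] x y = False"
| "before (a # l) x y = ((a = x \<and> y \<in> set l) \<or> before l x y)"

lemma before_set: "before l x y \<Longrightarrow> x \<in> set l \<and> y \<in> set l"
  by (induction l) auto

lemma before_append: "before (xs @ ys) x y \<longleftrightarrow> before xs x y \<or> (x \<in> set xs \<and> y \<in> set ys) \<or> before ys x y"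
  by (induction xs) auto

lemma before_filter: "P x \<Longrightarrow> P y \<Longrightarrow> before (filter P l) x y \<longleftrightarrow> before l x y"
  by (induction l) auto

lemma before_distinct_asym: "distinct l \<Longrightarrow> before l x y \<Longrightarrow> \<not> before l y x"
  by (induction l) (auto dest: before_set)

lemma before_irrefl: "distinct l \<Longrightarrow> \<not> before l x x"
  using before_distinct_asym by fastforce

lemma before_total: "x \<in> set l \<Longrightarrow> y \<in> set l \<Longrightarrow> x \<noteq> y \<Longrightarrow> before l x y \<or> before l y x"
  by (induction l) auto

lemma before_trans: "distinct l \<Longrightarrow> before l x y \<Longrightarrow> before l y z \<Longrightarrow> before l x z"
  by (induction l) (auto dest: before_set)

lemma sorted_wrt_before: "sorted_wrt R l \<longleftrightarrow> (\<forall>x y. before l x y \<longrightarrow> R x y)"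
  by (induction l) auto

lemma before_nth: "before l x y \<longleftrightarrow> (\<exists>i j. i < j \<and> j < length l \<and> l ! i = x \<and> l ! j = y)"
proof (induction l)
  case Nil then show ?case by simp
next
  case (Cons a l)
  show ?case
  proof
    assume "before (a # l) x y"
    then consider "a = x" "y \<in> set l" | "before l x y" by (metis before.simps(2))
    then show "\<exists>i j. i < j \<and> j < length (a # l) \<and> (a # l) ! i = x \<and> (a # l) ! j = y"
    proof cases
      case 1
      then obtain j where "j < length l" "l ! j = y" by (metis in_set_conv_nth)
      then show ?thesis using 1 by (intro exI[of _ 0] exI[of _ "Suc j"]) simp
    next
      case 2
      then obtain i j where "i < j \<and> j < length l \<and> l ! i = x \<and> l ! j = y" using Cons.IH by blast
      then show ?thesis by (intro exI[of _ "Suc i"] exI[of _ "Suc j"]) simp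
    qed
  next
    assume "\<exists>i j. i < j \<and> j < length (a # l) \<and> (a # l) ! i = x \<and> (a # l) ! j = y"
    then obtain i j where ij: "i < j" "j < length (a # l)" "(a # l) ! i = x" "(a # l) ! j = y" by blast
    then obtain j' where j': "j = Suc j'" by (cases j) simp_all
    show "before (a # l) x y"
    proof (cases i)
      case 0 then have "x = a" "y = l ! j'" "j' < length l" using ij j' by simp_all
      then show ?thesis by simp
    next
      case (Suc i')
      have "i' < j'" "j' < length l" "l ! i' = x" "l ! j' = y" using ij j' Suc by simp_all
      then have "\<exists>i j. i < j \<and> j < length l \<and> l ! i = x \<and> l ! j = y" by blast
      with Cons.IH have "before l x y" by blast
      then show ?thesis by simp
    qed
  qed
qed

lemma before_nthI: "i < j \<Longrightarrow> j < length l \<Longrightarrow> before l (l ! i) (l ! j)"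
  by (subst before_nth) blast

lemma filter_in_shuffles: "l \<in> shuffles (filter P l) (filter (\<lambda>x. \<not> P x) l)"
  by (induction l) (simp_all add: Cons_in_shuffles_leftI Cons_in_shuffles_rightI)

lemma split_filter2:
  assumes "\<And>x. x \<in> set l \<Longrightarrow> P x \<or> Q x" "\<And>x. x \<in> set l \<Longrightarrow> \<not> (P x \<and> Q x)"
    "\<And>x y. P x \<Longrightarrow> Q y \<Longrightarrow> \<not> before l y x"
  shows "l = filter P l @ filter Q l"
  using assms
proof (induction l)
  case Nil then show ?case by simp
next
  case (Cons a l)
  have p1: "\<And>x. x \<in> set l \<Longrightarrow> P x \<or> Q x" using Cons.prems(1) by simp
  have p2: "\<And>x. x \<in> set l \<Longrightarrow> \<not> (P x \<and> Q x)" using Cons.prems(2) by simp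
  have p3: "\<And>x y. P x \<Longrightarrow> Q y \<Longrightarrow> \<not> before l y x" using Cons.prems(3) by (metis before.simps(2))
  have IH: "l = filter P l @ filter Q l" using p1 p2 p3 by (rule Cons.IH)
  show ?case
  proof (cases "P a")
    case True
    moreover have "\<not> Q a" using Cons.prems(2)[of a] True by simp
    ultimately show ?thesis using IH by simp
  next
    case False
    then have Qa: "Q a" using Cons.prems(1)[of a] by simp
    have nP: "\<forall>x\<in>set l. \<not> P x"
    proof
      fix x assume "x \<in> set l"
      then have "before (a # l) a x" by simp
      then show "\<not> P x" using Cons.prems(3)[OF _ Qa] by blast
    qed
    then have "filter P l = []" by (simp add: filter_empty_conv)
    moreover have "filter Q l = l" using nP p1 by (simp add: filter_id_conv)
    ultimately show ?thesis using False Qa by simp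
  qed
qed

lemma sorted_chain_unique:
  assumes "distinct xs" "distinct c" "set xs = set c" "sorted_wrt (before c) xs"
  shows "xs = c"
  using assms
proof (induction c arbitrary: xs)
  case Nil then show ?case by simp
next
  case (Cons a c)
  obtain b xs' where xs: "xs = b # xs'" using Cons.prems(3) by (cases xs) auto
  have "b = a"
  proof (rule ccontr)
    assume "b \<noteq> a"
    then have "a \<in> set xs'" using Cons.prems xs by (metis list.set_intros(1) set_ConsD)
    then have "before (a # c) b a" using Cons.prems(4) unfolding xs sorted_wrt.simps by blast
    then have "before c b a" using \<open>b \<noteq> a\<close> by simp
    then show False using Cons.prems(2) by (auto dest: before_set)
  qed
  have "xs' = c"
  proof (rule Cons.IH)
    show "distinct xs'" "distinct c" using Cons.prems(1,2) xs by auto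
    show "set xs' = set c" using Cons.prems(1,2,3) xs \<open>b = a\<close> by auto
    have "sorted_wrt (before (a # c)) xs'" using Cons.prems(4) unfolding xs sorted_wrt.simps by blast
    moreover have "\<And>x y. x \<in> set xs' \<Longrightarrow> before (a # c) x y \<Longrightarrow> before c x y"
      using Cons.prems(1) xs \<open>b = a\<close> by auto
    ultimately show "sorted_wrt (before c) xs'"
      by (metis (no_types, lifting) sorted_wrt_mono_rel)
  qed
  then show ?case using xs \<open>b = a\<close> by simp
qed

definition Inv :: "'a list \<Rightarrow> 'a list \<Rightarrow> ('a \<times> 'a) set" where
  "Inv r l = {(x, y). before l x y \<and> before r y x}"

definition lsign :: "'a list \<Rightarrow> 'a list \<Rightarrow> int" where
  "lsign r l = (-1) ^ card (Inv r l)"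

lemma finite_Inv: "finite (Inv r l)"
proof -
  have "Inv r l \<subseteq> set l \<times> set l" unfolding Inv_def by (auto dest: before_set)
  then show ?thesis by (rule finite_subset) simp
qed

lemma no_descent_eq:
  assumes "distinct l" "distinct r" "set l = set r"
    and nd: "\<And>i. Suc i < length l \<Longrightarrow> \<not> before r (l ! Suc i) (l ! i)"
  shows "l = r"
proof (rule sorted_chain_unique[OF assms(1,2,3)])
  have tr: "transp (before r)" using assms(2) by (auto simp: transp_def intro: before_trans)
  show "sorted_wrt (before r) l"
    unfolding sorted_wrt_iff_nth_Suc_transp[OF tr]
  proof (intro allI impI)
    fix i assume i: "Suc i < length l"
    have "l ! i \<noteq> l ! Suc i" using assms(1) i by (metis Suc_lessD n_not_Suc_n nth_eq_iff_index_eq)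
    moreover have "l ! i \<in> set r" using i assms(3) nth_mem[of i l] by simp
    moreover have "l ! Suc i \<in> set r" using i assms(3) nth_mem[of "Suc i" l] by simp
    ultimately show "before r (l ! i) (l ! Suc i)" using before_total[of "l ! i" r "l ! Suc i"] nd[OF i] by blast
  qed
qed

lemma permute_list_eq_id:
  assumes "distinct r" "\<sigma> permutes {..<length r}" "permute_list \<sigma> r = r"
  shows "\<sigma> = id"
proof
  fix i show "\<sigma> i = id i"
  proof (cases "i < length r")
    case True
    then have "\<sigma> i < length r" using permutes_in_image[OF assms(2), of i] by simp
    moreover have "r ! \<sigma> i = r ! i" using arg_cong[OF assms(3), of "\<lambda>l. l ! i"] True by (simp add: permute_list_def)
    ultimately show ?thesis using True assms(1) by (simp add: nth_eq_iff_index_eq)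
  next
    case False then show ?thesis using assms(2) by (simp add: permutes_not_in)
  qed
qed

lemma swap_decomp:
  assumes i: "Suc i < length l"
  shows "l = take i l @ l ! i # l ! Suc i # drop (Suc (Suc i)) l"
proof -
  have "drop i l = l ! i # drop (Suc i) l" using i by (simp add: Cons_nth_drop_Suc)
  moreover have "drop (Suc i) l = l ! Suc i # drop (Suc (Suc i)) l" using i by (simp add: Cons_nth_drop_Suc)
  ultimately show ?thesis by (metis append_take_drop_id)
qed

lemma swap_perm_list:
  assumes i: "Suc i < length l"
  shows "permute_list (transpose i (Suc i)) l = take i l @ l ! Suc i # l ! i # drop (Suc (Suc i)) l"
proof (rule nth_equalityI)
  show "length (permute_list (transpose i (Suc i)) l) = length (take i l @ l ! Suc i # l ! i # drop (Suc (Suc i)) l)"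
    using i by simp
next
  fix k assume k: "k < length (permute_list (transpose i (Suc i)) l)"
  then have k': "k < length l" by simp
  have lhs: "permute_list (transpose i (Suc i)) l ! k = l ! (transpose i (Suc i) k)"
    using k' by (simp add: permute_list_def)
  consider "k < i" | "k = i" | "k = Suc i" | "Suc i < k" by linarith
  then show "permute_list (transpose i (Suc i)) l ! k = (take i l @ l ! Suc i # l ! i # drop (Suc (Suc i)) l) ! k"
  proof cases
    case 1 then show ?thesis using lhs i by (simp add: nth_append transpose_def)
  next
    case 2 then show ?thesis using lhs i by (simp add: nth_append transpose_def)
  next
    case 3 then show ?thesis using lhs i by (simp add: nth_append transpose_def)
  next
    case 4
    then obtain d where d: "k = Suc (Suc i) + d" by (metis less_iff_Suc_add add_Suc_right add_Suc)
    have "(take i l @ l ! Suc i # l ! i # drop (Suc (Suc i)) l) ! k = drop (Suc (Suc i)) l ! d"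
      using i d by (simp add: nth_append)
    also have "\<dots> = l ! k" using d k' by simp
    finally show ?thesis using lhs 4 by (simp add: transpose_def)
  qed
qed

lemma Inv_swap:
  assumes dl: "distinct (us @ x # y # ws)" and dr: "distinct r" and xy: "before r y x"
  shows "Inv r (us @ x # y # ws) = insert (x, y) (Inv r (us @ y # x # ws))"
    and "(x, y) \<notin> Inv r (us @ y # x # ws)"
proof -
  have nxy: "\<not> before r x y" using before_distinct_asym[OF dr xy] .
  have ne: "x \<noteq> y" using dl by auto
  have xus: "x \<notin> set us" "y \<notin> set us" "x \<notin> set ws" "y \<notin> set ws" using dl by auto
  show "Inv r (us @ x # y # ws) = insert (x, y) (Inv r (us @ y # x # ws))"
    unfolding Inv_def using nxy ne xus xy by (auto simp: before_append)
  show "(x, y) \<notin> Inv r (us @ y # x # ws)"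
    unfolding Inv_def using ne xus by (auto simp: before_append dest: before_set)
qed

lemma sign_Inv_aux:
  assumes dr: "distinct r"
  shows "\<sigma> permutes {..<length r} \<Longrightarrow> card (Inv r (permute_list \<sigma> r)) = n \<Longrightarrow> sign \<sigma> = (-1) ^ n"
proof (induction n arbitrary: \<sigma>)
  case 0
  let ?l = "permute_list \<sigma> r"
  have dl: "distinct ?l" "set ?l = set r" using 0(1) dr by auto
  have "Inv r ?l = {}" using 0(2) finite_Inv card_0_eq by blast
  then have "\<And>i. Suc i < length ?l \<Longrightarrow> \<not> before r (?l ! Suc i) (?l ! i)"
  proof -
    fix i assume i: "Suc i < length ?l" and e: "Inv r ?l = {}"
    have "before ?l (?l ! i) (?l ! Suc i)" using i by (intro before_nthI) auto
    then show "\<not> before r (?l ! Suc i) (?l ! i)" using e unfolding Inv_def by blast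
  qed
  then have "?l = r" by (rule no_descent_eq[OF dl(1) dr dl(2)])
  then have "\<sigma> = id" by (rule permute_list_eq_id[OF dr 0(1)])
  then show ?case by simp
next
  case (Suc n)
  let ?l = "permute_list \<sigma> r"
  have dl: "distinct ?l" "set ?l = set r" using Suc.prems(1) dr by auto
  have "?l \<noteq> r"
  proof
    assume "?l = r"
    then have "Inv r ?l = {}" unfolding Inv_def using before_distinct_asym[OF dr] by auto
    then show False using Suc.prems(2) by simp
  qed
  then have "\<not> (\<forall>i. Suc i < length ?l \<longrightarrow> \<not> before r (?l ! Suc i) (?l ! i))"
    using no_descent_eq[OF dl(1) dr dl(2)] by blast
  then obtain i where i: "Suc i < length ?l" and desc: "before r (?l ! Suc i) (?l ! i)"
    by blast
  define t where "t = transpose i (Suc i)"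
  have tp: "t permutes {..<length r}" unfolding t_def using i by (intro permutes_swap_id) auto
  define \<sigma>' where "\<sigma>' = \<sigma> \<circ> t"
  have sp: "\<sigma>' permutes {..<length r}" unfolding \<sigma>'_def using tp Suc.prems(1) by (rule permutes_compose)
  have l': "permute_list \<sigma>' r = permute_list t ?l"
    unfolding \<sigma>'_def using tp by (simp add: permute_list_compose)
  define us where "us = take i ?l"
  define x where "x = ?l ! i"
  define y where "y = ?l ! Suc i"
  define ws where "ws = drop (Suc (Suc i)) ?l"
  have dec: "?l = us @ x # y # ws" using i unfolding us_def x_def y_def ws_def by (rule swap_decomp)
  have dec': "permute_list \<sigma>' r = us @ y # x # ws"
    using l' swap_perm_list[OF i] unfolding t_def us_def x_def y_def ws_def by simp
  have dl2: "distinct (us @ x # y # ws)" using dl(1) unfolding dec[symmetric] .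
  have desc2: "before r y x" using desc unfolding x_def y_def .
  have "card (Inv r ?l) = card (insert (x, y) (Inv r (permute_list \<sigma>' r)))"
    unfolding dec' using Inv_swap(1)[OF dl2 dr desc2] dec by simp
  also have "\<dots> = Suc (card (Inv r (permute_list \<sigma>' r)))"
    using Inv_swap(2)[OF dl2 dr desc2] unfolding dec' by (simp add: finite_Inv)
  finally have "card (Inv r ?l) = Suc (card (Inv r (permute_list \<sigma>' r)))" .
  then have "card (Inv r (permute_list \<sigma>' r)) = n" using Suc.prems(2) by simp
  then have s': "sign \<sigma>' = (-1) ^ n" using Suc.IH sp by blast
  have "sign \<sigma>' = sign \<sigma> * sign t"
    unfolding \<sigma>'_def using Suc.prems(1) tp
    by (intro sign_compose) (auto simp: permutation_permutes)
  moreover have "sign t = -1" unfolding t_def by (simp add: sign_swap_id)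
  ultimately show ?case using s' by (simp add: algebra_simps)
qed

lemma sign_lsign:
  assumes "distinct r" "\<sigma> permutes {..<length r}"
  shows "sign \<sigma> = lsign r (permute_list \<sigma> r)"
  unfolding lsign_def using sign_Inv_aux[OF assms(1) assms(2) refl] .

fun Gf :: "nat \<Rightarrow> nat \<Rightarrow> int" where
  "Gf 0 k = 1"
| "Gf (Suc w) 0 = 1"
| "Gf (Suc w) (Suc k) = (-1) ^ Suc k * Gf w (Suc k) + Gf (Suc w) k"

lemma Gf_closed: "Gf w k = (if even k \<or> even w then int ((w div 2 + k div 2) choose (w div 2)) else 0)"
proof (induction w k rule: Gf.induct)
  case (1 k) then show ?case by simp
next
  case (2 w) then show ?case by simp
next
  case (3 w k)
  consider "even w" "even k" | "even w" "odd k" | "odd w" "even k" | "odd w" "odd k" by blast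
  then show ?case
  proof cases
    case 1
    then obtain a b where ab: "w = 2 * a" "k = 2 * b" by (metis evenE)
    show ?thesis using 3 ab by simp
  next
    case 2
    then obtain a b where ab: "w = 2 * a" "k = Suc (2 * b)" by (metis evenE oddE Suc_eq_plus1)
    show ?thesis using 3 ab by simp
  next
    case 3
    then obtain a b where ab: "w = Suc (2 * a)" "k = 2 * b" by (metis evenE oddE Suc_eq_plus1)
    show ?thesis using "3.IH" ab by simp
  next
    case 4
    then obtain a b where ab: "w = Suc (2 * a)" "k = Suc (2 * b)" by (metis oddE Suc_eq_plus1)
    have e1: "Suc (Suc (2 * a)) div 2 = Suc a" by simp
    have e2: "Suc (Suc (2 * b)) div 2 = Suc b" by simp
    have "Gf (Suc w) (Suc k) = Gf w (Suc k) + Gf (Suc w) k" using ab by simp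
    also have "\<dots> = int ((a + Suc b) choose a) + int ((Suc a + b) choose Suc a)"
      using "3.IH" ab by simp
    also have "\<dots> = int ((Suc a + Suc b) choose Suc a)"
      by (simp add: add.commute add.left_commute)
    finally show ?thesis using ab by simp
  qed
qed

fun bpoly :: "nat \<Rightarrow> rat poly" where
  "bpoly 0 = 1"
| "bpoly (Suc w) = smult (1 / of_nat (Suc w)) ([:of_nat (Suc w), 1:] * bpoly w)"

lemma bpoly_eval: "poly (bpoly w) (of_nat k) = of_nat ((w + k) choose w)"
proof (induction w)
  case 0 then show ?case by simp
next
  case (Suc w)
  have key: "of_nat (Suc w) * of_nat ((Suc w + k) choose Suc w) = (of_nat (Suc w + k) :: rat) * of_nat ((w + k) choose w)"
  proof -
    have "Suc w * (Suc (w + k) choose Suc w) = Suc (w + k) * ((w + k) choose w)"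
      by (rule Suc_times_binomial)
    then show ?thesis by (metis add_Suc of_nat_mult)
  qed
  have "poly (bpoly (Suc w)) (of_nat k) = (of_nat k + of_nat (Suc w)) * of_nat ((w + k) choose w) / of_nat (Suc w)"
    using Suc by (simp add: field_simps)
  also have "\<dots> = of_nat ((Suc w + k) choose Suc w)"
    using key by (simp add: field_simps)
  finally show ?case .
qed

lemma bpoly_degree: "degree (bpoly w) = w \<and> lead_coeff (bpoly w) > 0"
proof (induction w)
  case 0 then show ?case by simp
next
  case (Suc w)
  have nz: "bpoly w \<noteq> 0" using Suc by auto
  have nz2: "[:of_nat (Suc w), 1:] \<noteq> (0 :: rat poly)" by simp
  have d: "degree ([:of_nat (Suc w), 1:] * bpoly w) = Suc w"
    using degree_mult_eq[OF nz2 nz] Suc by simp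
  have l0: "lead_coeff ([:of_nat (Suc w), 1:] * bpoly w) = lead_coeff [:of_nat (Suc w), 1:] * lead_coeff (bpoly w)"
    by (rule lead_coeff_mult)
  have l1: "lead_coeff [:of_nat (Suc w), 1:] = (1::rat)" by simp
  have l: "lead_coeff ([:of_nat (Suc w), 1:] * bpoly w) = lead_coeff (bpoly w)"
    using l0 l1 by simp
  have "degree (bpoly (Suc w)) = Suc w" using d by simp
  moreover have "lead_coeff (bpoly (Suc w)) = lead_coeff (bpoly w) / of_nat (Suc w)"
    using d l by simp
  moreover have "lead_coeff (bpoly w) / of_nat (Suc w) > 0"
    using Suc by (intro divide_pos_pos) auto
  ultimately show ?case by simp
qed

definition Gpoly_even :: "nat \<Rightarrow> rat poly" where
  "Gpoly_even w = pcompose (bpoly (w div 2)) [:0, 1/2:]"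

definition Gpoly_odd :: "nat \<Rightarrow> rat poly" where
  "Gpoly_odd w = (if even w then pcompose (bpoly (w div 2)) [:-1/2, 1/2:] else 0)"

lemma Gpoly_even_eval: "even k \<Longrightarrow> of_int (Gf w k) = poly (Gpoly_even w) (of_nat k)"
proof -
  assume "even k"
  then obtain b where b: "k = 2 * b" by (metis evenE)
  have "poly (Gpoly_even w) (of_nat k) = poly (bpoly (w div 2)) (of_nat b)"
    unfolding Gpoly_even_def poly_pcompose using b by simp
  then show ?thesis using b by (simp add: Gf_closed bpoly_eval)
qed

lemma Gpoly_odd_eval: "odd k \<Longrightarrow> of_int (Gf w k) = poly (Gpoly_odd w) (of_nat k)"
proof -
  assume "odd k"
  then obtain b where b: "k = Suc (2 * b)" by (metis oddE Suc_eq_plus1)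
  show ?thesis
  proof (cases "even w")
    case True
    have "poly (Gpoly_odd w) (of_nat k) = poly (bpoly (w div 2)) (of_nat b)"
      unfolding Gpoly_odd_def using b True by (simp add: poly_pcompose field_simps)
    then show ?thesis using b True by (simp add: Gf_closed bpoly_eval)
  next
    case False
    then show ?thesis using b by (simp add: Gf_closed Gpoly_odd_def)
  qed
qed

lemma Gpoly_even_degree: "degree (Gpoly_even w) \<le> w div 2"
  unfolding Gpoly_even_def by (simp add: degree_pcompose bpoly_degree)

lemma Gpoly_odd_degree: "degree (Gpoly_odd w) \<le> w div 2"
  unfolding Gpoly_odd_def by (simp add: degree_pcompose bpoly_degree)

definition Upred :: "'a set \<Rightarrow> 'a list \<Rightarrow> 'a \<Rightarrow> bool" where
  "Upred Lo \<tau> x = (\<exists>y\<in>Lo. x = y \<or> before \<tau> x y)"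

definition Wpred :: "'a set \<Rightarrow> 'a list \<Rightarrow> 'a \<Rightarrow> bool" where
  "Wpred Hi \<tau> x = (\<exists>y\<in>Hi. x = y \<or> before \<tau> y x)"

definition uL where "uL Lo \<tau> = filter (Upred Lo \<tau>) \<tau>"
definition wL where "wL Hi \<tau> = filter (Wpred Hi \<tau>) \<tau>"
definition vL where "vL Lo Hi \<tau> = filter (\<lambda>x. \<not> Upred Lo \<tau> x \<and> \<not> Wpred Hi \<tau> x) \<tau>"

lemma filter_block1:
  assumes "distinct (u @ v @ w)" shows "filter (\<lambda>x. x \<in> set u) (u @ v @ w) = u"
proof -
  have "filter (\<lambda>x. x \<in> set u) u = u" by simp
  moreover have "filter (\<lambda>x. x \<in> set u) v = []" using assms by (auto simp: filter_empty_conv)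
  moreover have "filter (\<lambda>x. x \<in> set u) w = []" using assms by (auto simp: filter_empty_conv)
  ultimately show ?thesis by simp
qed

lemma filter_block3:
  assumes "distinct (u @ v @ w)" shows "filter (\<lambda>x. x \<in> set w) (u @ v @ w) = w"
proof -
  have "filter (\<lambda>x. x \<in> set w) w = w" by simp
  moreover have "filter (\<lambda>x. x \<in> set w) v = []" using assms by (auto simp: filter_empty_conv)
  moreover have "filter (\<lambda>x. x \<in> set w) u = []" using assms by (auto simp: filter_empty_conv)
  ultimately show ?thesis by simp
qed

lemma filter_block2:
  assumes "distinct (u @ v @ w)" shows "filter (\<lambda>x. x \<notin> set u \<and> x \<notin> set w) (u @ v @ w) = v"
proof -
  have "filter (\<lambda>x. x \<notin> set u \<and> x \<notin> set w) u = []" by (auto simp: filter_empty_conv)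
  moreover have "filter (\<lambda>x. x \<notin> set u \<and> x \<notin> set w) v = v" using assms by (auto simp: filter_id_conv)
  moreover have "filter (\<lambda>x. x \<notin> set u \<and> x \<notin> set w) w = []" by (auto simp: filter_empty_conv)
  ultimately show ?thesis by simp
qed

locale core =
  fixes R :: "'a \<Rightarrow> 'a \<Rightarrow> bool" and Ob Lo Hi :: "'a set"
  assumes LoO: "Lo \<subseteq> Ob" and HiO: "Hi \<subseteq> Ob"
    and LoHi: "\<And>y z. y \<in> Lo \<Longrightarrow> z \<in> Hi \<Longrightarrow> \<not> R z y"
    and LoHi_disj: "Lo \<inter> Hi = {}"
begin

definition VO where "VO = {\<tau>. distinct \<tau> \<and> set \<tau> = Ob \<and> sorted_wrt R \<tau>}"
definition Vc where "Vc c = {l. distinct l \<and> set l = Ob \<union> set c \<and> sorted_wrt R l}"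

abbreviation "U \<equiv> Upred Lo"
abbreviation "W \<equiv> Wpred Hi"

lemma UW_disj:
  assumes "\<tau> \<in> VO" "U \<tau> x" "W \<tau> x" shows False
proof -
  have d: "distinct \<tau>" and srt: "sorted_wrt R \<tau>" using assms(1) unfolding VO_def by auto
  obtain lo where lo: "lo \<in> Lo" "x = lo \<or> before \<tau> x lo" using assms(2) unfolding Upred_def by blast
  obtain hi where hi: "hi \<in> Hi" "x = hi \<or> before \<tau> hi x" using assms(3) unfolding Wpred_def by blast
  have "hi \<noteq> lo" using lo(1) hi(1) LoHi_disj by blast
  then have "before \<tau> hi lo"
  proof -
    assume ne: "hi \<noteq> lo"
    consider "x = lo" "x = hi" | "x = lo" "before \<tau> hi x" | "before \<tau> x lo" "x = hi" | "before \<tau> x lo" "before \<tau> hi x"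
      using lo(2) hi(2) by blast
    then show ?thesis
    proof cases
      case 1 then show ?thesis using ne by simp
    next
      case 2 then show ?thesis by simp
    next
      case 3 then show ?thesis by simp
    next
      case 4 then show ?thesis using before_trans[OF d, of hi x lo] by simp
    qed
  qed
  then have "R hi lo" using srt unfolding sorted_wrt_before by blast
  then show False using LoHi[OF lo(1) hi(1)] by blast
qed

lemma U_closed:
  assumes d: "distinct \<tau>" and u: "U \<tau> x" and b: "before \<tau> y x" shows "U \<tau> y"
proof -
  obtain lo where lo: "lo \<in> Lo" "x = lo \<or> before \<tau> x lo" using u unfolding Upred_def by blast
  have "before \<tau> y lo"
  proof (cases "x = lo")
    case True then show ?thesis using b by simp
  next
    case False then show ?thesis using lo(2) b before_trans[OF d, of y x lo] by simp
  qed
  then show ?thesis using lo(1) unfolding Upred_def by blast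
qed

lemma W_closed:
  assumes d: "distinct \<tau>" and u: "W \<tau> x" and b: "before \<tau> x y" shows "W \<tau> y"
proof -
  obtain hi where hi: "hi \<in> Hi" "x = hi \<or> before \<tau> hi x" using u unfolding Wpred_def by blast
  have "before \<tau> hi y"
  proof (cases "x = hi")
    case True then show ?thesis using b by simp
  next
    case False then show ?thesis using hi(2) b before_trans[OF d, of hi x y] by simp
  qed
  then show ?thesis using hi(1) unfolding Wpred_def by blast
qed

lemma decomp:
  assumes "\<tau> \<in> VO" shows "\<tau> = uL Lo \<tau> @ vL Lo Hi \<tau> @ wL Hi \<tau>"
proof -
  have d: "distinct \<tau>" using assms unfolding VO_def by auto
  have s1: "\<tau> = filter (U \<tau>) \<tau> @ filter (\<lambda>x. \<not> U \<tau> x) \<tau>"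
    by (rule split_filter2) (use U_closed[OF d] in blast)+
  let ?r = "filter (\<lambda>x. \<not> U \<tau> x) \<tau>"
  have s2: "?r = filter (\<lambda>x. \<not> W \<tau> x) ?r @ filter (W \<tau>) ?r"
  proof (rule split_filter2)
    show "\<And>x y. \<not> W \<tau> x \<Longrightarrow> W \<tau> y \<Longrightarrow> \<not> before ?r y x"
      using W_closed[OF d] before_filter by (metis (no_types, lifting) before_set mem_Collect_eq set_filter)
  qed auto
  have f1: "filter (\<lambda>x. \<not> W \<tau> x) ?r = vL Lo Hi \<tau>" unfolding vL_def by (simp add: conj_commute)
  have f2: "filter (W \<tau>) ?r = wL Hi \<tau>" unfolding wL_def using UW_disj[OF assms]
    by (auto intro!: filter_cong)
  show ?thesis using s1 s2 f1 f2 unfolding uL_def by metis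
qed

lemma VO_parts:
  assumes "\<tau> \<in> VO"
  shows "distinct (uL Lo \<tau> @ vL Lo Hi \<tau> @ wL Hi \<tau>)"
    and "set (uL Lo \<tau>) \<inter> Hi = {}" and "set (wL Hi \<tau>) \<inter> Lo = {}"
    and "set (vL Lo Hi \<tau>) \<inter> Lo = {}" and "set (vL Lo Hi \<tau>) \<inter> Hi = {}"
    and "set (vL Lo Hi \<tau>) \<subseteq> Ob"
proof -
  have d: "distinct \<tau>" and st: "set \<tau> = Ob" using assms unfolding VO_def by auto
  show "distinct (uL Lo \<tau> @ vL Lo Hi \<tau> @ wL Hi \<tau>)" using decomp[OF assms] d by metis
  show "set (uL Lo \<tau>) \<inter> Hi = {}"
  proof -
    { fix x assume x: "x \<in> set (uL Lo \<tau>)" "x \<in> Hi"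
      then have "U \<tau> x" unfolding uL_def by simp
      moreover have "W \<tau> x" using x(2) unfolding Wpred_def by blast
      ultimately have False using UW_disj[OF assms] by blast }
    then show ?thesis by blast
  qed
  show "set (wL Hi \<tau>) \<inter> Lo = {}"
  proof -
    { fix x assume x: "x \<in> set (wL Hi \<tau>)" "x \<in> Lo"
      then have "W \<tau> x" unfolding wL_def by simp
      moreover have "U \<tau> x" using x(2) unfolding Upred_def by blast
      ultimately have False using UW_disj[OF assms] by blast }
    then show ?thesis by blast
  qed
  show "set (vL Lo Hi \<tau>) \<inter> Lo = {}" unfolding vL_def Upred_def by auto
  show "set (vL Lo Hi \<tau>) \<inter> Hi = {}" unfolding vL_def Wpred_def by auto
  show "set (vL Lo Hi \<tau>) \<subseteq> Ob" unfolding vL_def using st by auto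
qed

end

context core begin

definition chainok :: "'a list \<Rightarrow> bool" where
  "chainok c \<longleftrightarrow> distinct c \<and> set c \<inter> Ob = {} \<and>
     (\<forall>x\<in>set c. \<forall>y\<in>set c. R x y \<longleftrightarrow> before c x y) \<and>
     (\<forall>y\<in>Ob. \<forall>x\<in>set c. R y x \<longleftrightarrow> y \<notin> Hi) \<and>
     (\<forall>y\<in>Ob. \<forall>x\<in>set c. R x y \<longleftrightarrow> y \<notin> Lo)"

lemma VO_basic: "\<tau> \<in> VO \<Longrightarrow> distinct \<tau> \<and> set \<tau> = Ob \<and> sorted_wrt R \<tau>"
  unfolding VO_def by simp

lemma into:
  assumes ok: "chainok c" and t: "\<tau> \<in> VO" and s: "s \<in> shuffles (vL Lo Hi \<tau>) c"
  defines "l \<equiv> uL Lo \<tau> @ s @ wL Hi \<tau>"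
  shows "l \<in> Vc c" and "filter (\<lambda>x. x \<in> Ob) l = \<tau>"
proof -
  let ?u = "uL Lo \<tau>" and ?v = "vL Lo Hi \<tau>" and ?w = "wL Hi \<tau>"
  have dc: "distinct c" and cO: "set c \<inter> Ob = {}"
    and cR: "\<And>x y. x \<in> set c \<Longrightarrow> y \<in> set c \<Longrightarrow> R x y \<longleftrightarrow> before c x y"
    and cH: "\<And>x y. y \<in> Ob \<Longrightarrow> x \<in> set c \<Longrightarrow> R y x \<longleftrightarrow> y \<notin> Hi"
    and cL: "\<And>x y. y \<in> Ob \<Longrightarrow> x \<in> set c \<Longrightarrow> R x y \<longleftrightarrow> y \<notin> Lo"
    using ok unfolding chainok_def by auto
  have tb: "distinct \<tau>" "set \<tau> = Ob" "sorted_wrt R \<tau>" using VO_basic[OF t] by auto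
  have dec: "\<tau> = ?u @ ?v @ ?w" by (rule decomp[OF t])
  have duvw: "distinct (?u @ ?v @ ?w)" by (rule VO_parts(1)[OF t])
  have un: "set ?u \<union> set ?v \<union> set ?w = Ob"
  proof -
    have "set \<tau> = set (?u @ ?v @ ?w)" using dec by (rule arg_cong)
    then show ?thesis using tb(2) by (simp add: Un_assoc)
  qed
  have uO: "set ?u \<subseteq> Ob" "set ?v \<subseteq> Ob" "set ?w \<subseteq> Ob" using un by auto
  have uH: "set ?u \<inter> Hi = {}" "set ?w \<inter> Lo = {}" "set ?v \<inter> Lo = {}" "set ?v \<inter> Hi = {}"
    using VO_parts[OF t] by auto
  have ss: "set s = set ?v \<union> set c" using s by (rule set_shuffles)
  have ds: "distinct s"
    using distinct_disjoint_shuffles[of ?v c s] duvw dc cO uO s by auto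
  have dl: "distinct l" unfolding l_def using duvw ds ss cO uO by auto
  have sl: "set l = Ob \<union> set c" unfolding l_def using ss un by auto
  have fs: "filter (\<lambda>x. x \<in> Ob) s = ?v"
  proof -
    have "filter (\<lambda>x. x \<in> Ob) s \<in> shuffles (filter (\<lambda>x. x \<in> Ob) ?v) (filter (\<lambda>x. x \<in> Ob) c)"
      using filter_shuffles[of "\<lambda>x. x \<in> Ob" ?v c] s by blast
    moreover have "filter (\<lambda>x. x \<in> Ob) ?v = ?v" using uO by (simp add: filter_id_conv subset_iff)
    moreover have "filter (\<lambda>x. x \<in> Ob) c = []" using cO by (auto simp: filter_empty_conv)
    ultimately show ?thesis by simp
  qed
  have fc: "filter (\<lambda>x. x \<in> set c) s = c"
  proof -
    have "filter (\<lambda>x. x \<in> set c) s \<in> shuffles (filter (\<lambda>x. x \<in> set c) ?v) (filter (\<lambda>x. x \<in> set c) c)"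
      using filter_shuffles[of "\<lambda>x. x \<in> set c" ?v c] s by blast
    moreover have "filter (\<lambda>x. x \<in> set c) ?v = []" using uO cO by (auto simp: filter_empty_conv)
    moreover have "filter (\<lambda>x. x \<in> set c) c = c" by simp
    ultimately show ?thesis by simp
  qed
  have fO: "filter (\<lambda>x. x \<in> Ob) l = \<tau>"
  proof -
    have "filter (\<lambda>x. x \<in> Ob) ?u = ?u" using uO by (simp add: filter_id_conv subset_iff)
    moreover have "filter (\<lambda>x. x \<in> Ob) ?w = ?w" using uO by (simp add: filter_id_conv subset_iff)
    ultimately show ?thesis unfolding l_def using fs dec by simp
  qed
  then show "filter (\<lambda>x. x \<in> Ob) l = \<tau>" .
  have fC: "filter (\<lambda>x. x \<in> set c) l = c"
  proof -
    have "filter (\<lambda>x. x \<in> set c) ?u = []" using uO cO by (auto simp: filter_empty_conv)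
    moreover have "filter (\<lambda>x. x \<in> set c) ?w = []" using uO cO by (auto simp: filter_empty_conv)
    ultimately show ?thesis unfolding l_def using fc by simp
  qed
  have "sorted_wrt R l"
    unfolding sorted_wrt_before
  proof (intro allI impI)
    fix x y assume b: "before l x y"
    then have xy: "x \<in> set l" "y \<in> set l" using before_set[of l x y] by auto
    show "R x y"
    proof (cases "x \<in> Ob")
      case xO: True
      show ?thesis
      proof (cases "y \<in> Ob")
        case True
        then have "before \<tau> x y" using b xO fO before_filter[of "\<lambda>x. x \<in> Ob" x y l] by simp
        then show ?thesis using tb(3) unfolding sorted_wrt_before by blast
      next
        case False
        then have yc: "y \<in> set c" using xy sl by auto
        have "x \<notin> Hi"
        proof
          assume xH: "x \<in> Hi"
          then have "x \<in> set ?w" using xO un uH by auto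
          then have "x \<notin> set ?u" "x \<notin> set s" using duvw ss cO xO by auto
          moreover have "y \<notin> set ?w" using yc uO cO by auto
          ultimately show False using b unfolding l_def by (auto simp: before_append dest: before_set)
        qed
        then show ?thesis using cH[OF xO yc] by simp
      qed
    next
      case xnO: False
      then have xc: "x \<in> set c" using xy sl by auto
      show ?thesis
      proof (cases "y \<in> Ob")
        case yO: True
        have "y \<notin> Lo"
        proof
          assume yL: "y \<in> Lo"
          then have "y \<in> set ?u" using yO un uH by auto
          then have "y \<notin> set ?w" "y \<notin> set s" using duvw ss cO yO by auto
          moreover have "x \<notin> set ?u" using xc uO cO by auto
          ultimately show False using b unfolding l_def by (auto simp: before_append dest: before_set)
        qed
        then show ?thesis using cL[OF yO xc] by simp
      next
        case False
        then have yc: "y \<in> set c" using xy sl by auto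
        have "before c x y" using b xc yc fC before_filter[of "\<lambda>x. x \<in> set c" x y l] by simp
        then show ?thesis using cR[OF xc yc] by simp
      qed
    qed
  qed
  then show "l \<in> Vc c" unfolding Vc_def using dl sl by simp
qed

lemma filter_filter_cong: "(\<And>x. x \<in> set l \<Longrightarrow> (Q x \<and> P x) = P' x) \<Longrightarrow> filter P (filter Q l) = filter P' l"
  by (simp add: filter_filter cong: filter_cong)

lemma onto:
  assumes ok: "chainok c" and l: "l \<in> Vc c"
  defines "\<tau> \<equiv> filter (\<lambda>x. x \<in> Ob) l"
  shows "\<tau> \<in> VO \<and> (\<exists>s. s \<in> shuffles (vL Lo Hi \<tau>) c \<and> l = uL Lo \<tau> @ s @ wL Hi \<tau>)"
proof -
  have dc: "distinct c" and cO: "set c \<inter> Ob = {}"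
    and cR: "\<And>x y. x \<in> set c \<Longrightarrow> y \<in> set c \<Longrightarrow> R x y \<longleftrightarrow> before c x y"
    and cH: "\<And>x y. y \<in> Ob \<Longrightarrow> x \<in> set c \<Longrightarrow> R y x \<longleftrightarrow> y \<notin> Hi"
    and cL: "\<And>x y. y \<in> Ob \<Longrightarrow> x \<in> set c \<Longrightarrow> R x y \<longleftrightarrow> y \<notin> Lo"
    using ok unfolding chainok_def by auto
  have dl: "distinct l" and sl: "set l = Ob \<union> set c" and srt: "sorted_wrt R l"
    using l unfolding Vc_def by auto
  have t: "\<tau> \<in> VO" unfolding VO_def \<tau>_def using dl sl srt by (auto intro: sorted_wrt_filter)
  have tb: "distinct \<tau>" "set \<tau> = Ob" "sorted_wrt R \<tau>" using VO_basic[OF t] by auto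
  let ?u = "uL Lo \<tau>" and ?v = "vL Lo Hi \<tau>" and ?w = "wL Hi \<tau>"
  have dec: "\<tau> = ?u @ ?v @ ?w" by (rule decomp[OF t])
  have duvw: "distinct (?u @ ?v @ ?w)" by (rule VO_parts(1)[OF t])
  have un: "set ?u \<union> set ?v \<union> set ?w = Ob"
  proof -
    have "set \<tau> = set (?u @ ?v @ ?w)" using dec by (rule arg_cong)
    then show ?thesis using tb(2) by (simp add: Un_assoc)
  qed
  have uO: "set ?u \<subseteq> Ob" "set ?v \<subseteq> Ob" "set ?w \<subseteq> Ob" using un by auto
  have bOb: "\<And>x y. x \<in> Ob \<Longrightarrow> y \<in> Ob \<Longrightarrow> before \<tau> x y \<longleftrightarrow> before l x y"
    unfolding \<tau>_def by (rule before_filter)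
  have lR: "\<And>x y. before l x y \<Longrightarrow> R x y" using srt unfolding sorted_wrt_before by blast
  define S1 where "S1 = set ?u"
  define S3 where "S3 = set ?w"
  have S13: "S1 \<inter> S3 = {}" unfolding S1_def S3_def using duvw by auto
  have sA: "l = filter (\<lambda>x. x \<in> S1) l @ filter (\<lambda>x. x \<notin> S1) l"
  proof (rule split_filter2)
    fix x y assume x: "x \<in> S1" and y: "y \<notin> S1"
    show "\<not> before l y x"
    proof
      assume b: "before l y x"
      have xO: "x \<in> Ob" using x uO unfolding S1_def by auto
      have Ux: "U \<tau> x" using x unfolding S1_def uL_def by simp
      have yl: "y \<in> set l" using before_set[OF b] by simp
      show False
      proof (cases "y \<in> Ob")
        case True
        then have "before \<tau> y x" using bOb[OF True xO] b by simp
        then have "U \<tau> y" using U_closed[OF tb(1) Ux] by simp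
        moreover have "y \<in> set \<tau>" using True tb(2) by simp
        ultimately have "y \<in> S1" unfolding S1_def uL_def by simp
        then show False using y by simp
      next
        case False
        then have yc: "y \<in> set c" using yl sl by auto
        obtain lo where lo: "lo \<in> Lo" "x = lo \<or> before \<tau> x lo" using Ux unfolding Upred_def by blast
        have loO: "lo \<in> Ob" using lo(1) LoO by auto
        have "before l y lo"
        proof (cases "x = lo")
          case True then show ?thesis using b by simp
        next
          case False
          then have "before l x lo" using lo(2) bOb[OF xO loO] by simp
          then show ?thesis using before_trans[OF dl b] by simp
        qed
        then have "R y lo" by (rule lR)
        then show False using cL[OF loO yc] lo(1) by simp
      qed
    qed
  qed auto
  define r where "r = filter (\<lambda>x. x \<notin> S1) l"
  have sB: "r = filter (\<lambda>x. x \<notin> S3) r @ filter (\<lambda>x. x \<in> S3) r"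
  proof (rule split_filter2)
    fix x y assume x: "x \<notin> S3" and y: "y \<in> S3"
    show "\<not> before r y x"
    proof
      assume br: "before r y x"
      have inr: "x \<in> set r" "y \<in> set r" using before_set[OF br] by auto
      have b: "before l y x" using br inr unfolding r_def by (simp add: before_filter)
      have yO: "y \<in> Ob" using y uO unfolding S3_def by auto
      have Wy: "W \<tau> y" using y unfolding S3_def wL_def by simp
      have xl: "x \<in> set l" using before_set[OF b] by simp
      show False
      proof (cases "x \<in> Ob")
        case True
        then have "before \<tau> y x" using bOb[OF yO True] b by simp
        then have "W \<tau> x" using W_closed[OF tb(1) Wy] by simp
        moreover have "x \<in> set \<tau>" using True tb(2) by simp
        ultimately have "x \<in> S3" unfolding S3_def wL_def by simp
        then show False using x by simp
      next
        case False
        then have xc: "x \<in> set c" using xl sl by auto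
        obtain hi where hi: "hi \<in> Hi" "y = hi \<or> before \<tau> hi y" using Wy unfolding Wpred_def by blast
        have hiO: "hi \<in> Ob" using hi(1) HiO by auto
        have "before l hi x"
        proof (cases "y = hi")
          case True then show ?thesis using b by simp
        next
          case False
          then have "before l hi y" using hi(2) bOb[OF hiO yO] by simp
          then show ?thesis using before_trans[OF dl _ b] by simp
        qed
        then have "R hi x" by (rule lR)
        then show False using cH[OF hiO xc] hi(1) by simp
      qed
    qed
  qed auto
  define s where "s = filter (\<lambda>x. x \<notin> S3) r"
  have f1: "filter (\<lambda>x. x \<in> S1) l = ?u"
  proof -
    have "filter (\<lambda>x. x \<in> S1) l = filter (\<lambda>x. x \<in> S1) \<tau>"
      unfolding \<tau>_def using uO unfolding S1_def by (intro filter_filter_cong[symmetric]) auto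
    also have "\<dots> = ?u" unfolding S1_def by (subst dec, rule filter_block1[OF duvw])
    finally show ?thesis .
  qed
  have f3: "filter (\<lambda>x. x \<in> S3) r = ?w"
  proof -
    have "filter (\<lambda>x. x \<in> S3) r = filter (\<lambda>x. x \<in> S3) \<tau>"
      unfolding \<tau>_def r_def using uO S13 unfolding S3_def
      by (subst filter_filter_cong[where P' = "\<lambda>x. x \<in> set ?w"], blast, subst filter_filter_cong[where P' = "\<lambda>x. x \<in> set ?w"], auto)
    also have "\<dots> = ?w" unfolding S3_def by (subst dec, rule filter_block3[OF duvw])
    finally show ?thesis .
  qed
  have fv: "filter (\<lambda>x. x \<in> Ob) s = ?v"
  proof -
    have "filter (\<lambda>x. x \<in> Ob) s = filter (\<lambda>x. x \<notin> S1 \<and> x \<notin> S3) \<tau>"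
      unfolding s_def r_def \<tau>_def by (simp add: filter_filter conj_commute conj_left_commute)
    also have "\<dots> = ?v" unfolding S1_def S3_def by (subst dec, rule filter_block2[OF duvw])
    finally show ?thesis .
  qed
  have fcl: "filter (\<lambda>x. x \<in> set c) l = c"
  proof (rule sorted_chain_unique)
    show "distinct (filter (\<lambda>x. x \<in> set c) l)" using dl by simp
    show "distinct c" by (rule dc)
    show "set (filter (\<lambda>x. x \<in> set c) l) = set c" using sl by auto
    have "sorted_wrt R (filter (\<lambda>x. x \<in> set c) l)" using srt by (rule sorted_wrt_filter)
    then show "sorted_wrt (before c) (filter (\<lambda>x. x \<in> set c) l)"
      by (rule sorted_wrt_mono_rel[rotated]) (use cR in auto)
  qed
  have fc: "filter (\<lambda>x. x \<notin> Ob) s = c"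
  proof -
    have "filter (\<lambda>x. x \<notin> Ob) s = filter (\<lambda>x. x \<in> set c) l"
      unfolding s_def r_def using uO sl cO unfolding S1_def S3_def
      by (simp add: filter_filter, intro filter_cong) auto
    then show ?thesis using fcl by simp
  qed
  have sh: "s \<in> shuffles ?v c"
    using filter_in_shuffles[of s "\<lambda>x. x \<in> Ob"] fv fc by simp
  have "l = ?u @ s @ ?w" using sA sB f1 f3 unfolding s_def r_def by metis
  then show ?thesis using t sh by blast
qed

lemma core_bij:
  assumes ok: "chainok c"
  shows "bij_betw (\<lambda>(\<tau>, s). uL Lo \<tau> @ s @ wL Hi \<tau>) (SIGMA \<tau>:VO. shuffles (vL Lo Hi \<tau>) c) (Vc c)"
proof (rule bij_betw_imageI)
  show "inj_on (\<lambda>(\<tau>, s). uL Lo \<tau> @ s @ wL Hi \<tau>) (SIGMA \<tau>:VO. shuffles (vL Lo Hi \<tau>) c)"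
  proof (rule inj_onI, clarify)
    fix \<tau> s \<tau>' s'
    assume a: "\<tau> \<in> VO" "s \<in> shuffles (vL Lo Hi \<tau>) c" "\<tau>' \<in> VO" "s' \<in> shuffles (vL Lo Hi \<tau>') c"
      and e: "uL Lo \<tau> @ s @ wL Hi \<tau> = uL Lo \<tau>' @ s' @ wL Hi \<tau>'"
    have "\<tau> = \<tau>'" using into(2)[OF ok a(1,2)] into(2)[OF ok a(3,4)] e by metis
    then show "\<tau> = \<tau>' \<and> s = s'" using e by simp
  qed
  show "(\<lambda>(\<tau>, s). uL Lo \<tau> @ s @ wL Hi \<tau>) ` (SIGMA \<tau>:VO. shuffles (vL Lo Hi \<tau>) c) = Vc c"
  proof
    show "(\<lambda>(\<tau>, s). uL Lo \<tau> @ s @ wL Hi \<tau>) ` (SIGMA \<tau>:VO. shuffles (vL Lo Hi \<tau>) c) \<subseteq> Vc c"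
      using into(1)[OF ok] by auto
    show "Vc c \<subseteq> (\<lambda>(\<tau>, s). uL Lo \<tau> @ s @ wL Hi \<tau>) ` (SIGMA \<tau>:VO. shuffles (vL Lo Hi \<tau>) c)"
    proof
      fix l assume "l \<in> Vc c"
      then obtain s where "filter (\<lambda>x. x \<in> Ob) l \<in> VO" "s \<in> shuffles (vL Lo Hi (filter (\<lambda>x. x \<in> Ob) l)) c"
        "l = uL Lo (filter (\<lambda>x. x \<in> Ob) l) @ s @ wL Hi (filter (\<lambda>x. x \<in> Ob) l)"
        using onto[OF ok] by blast
      then show "l \<in> (\<lambda>(\<tau>, s). uL Lo \<tau> @ s @ wL Hi \<tau>) ` (SIGMA \<tau>:VO. shuffles (vL Lo Hi \<tau>) c)"
        by (intro image_eqI[where x = "(filter (\<lambda>x. x \<in> Ob) l, s)"]) auto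
    qed
  qed
qed

end

definition Wt :: "'a list \<Rightarrow> 'a list \<Rightarrow> 'a list \<Rightarrow> int" where
  "Wt v c s = (\<Prod>y\<in>set v. \<Prod>x\<in>set c. if before s y x then -1 else 1)"

lemma prod_ind_card:
  assumes "finite T" "S \<subseteq> T"
  shows "(\<Prod>p\<in>T. if p \<in> S then -1 else 1) = ((-1::int) ^ card S)"
proof -
  have "(\<Prod>p\<in>T. if p \<in> S then -1 else (1::int)) = (\<Prod>p\<in>T \<inter> {p. p \<in> S}. -1) * (\<Prod>p\<in>T \<inter> - {p. p \<in> S}. 1)"
    by (rule prod.If_cases[OF assms(1)])
  moreover have "T \<inter> {p. p \<in> S} = S" using assms(2) by auto
  ultimately show ?thesis by simp
qed

lemma prod_const_if:
  assumes "finite T"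
  shows "(\<Prod>p\<in>T. if P p then -1 else 1) = ((-1::int) ^ card {p\<in>T. P p})"
proof -
  have "(\<Prod>p\<in>T. if P p then -1 else 1) = (\<Prod>p\<in>T. if p \<in> {p\<in>T. P p} then -1 else (1::int))"
    by (rule prod.cong) auto
  also have "\<dots> = (-1) ^ card {p\<in>T. P p}" using assms by (intro prod_ind_card) auto
  finally show ?thesis .
qed

lemma lsign_prod:
  "lsign r l = (\<Prod>x\<in>set l. \<Prod>y\<in>set l. if before l x y \<and> before r y x then -1 else 1)"
proof -
  have "(\<Prod>x\<in>set l. \<Prod>y\<in>set l. if before l x y \<and> before r y x then -1 else (1::int))
      = (\<Prod>p\<in>set l \<times> set l. if p \<in> Inv r l then -1 else 1)"
  proof -
    have "(\<Prod>x\<in>set l. \<Prod>y\<in>set l. if before l x y \<and> before r y x then -1 else (1::int))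
      = (\<Prod>(x, y)\<in>set l \<times> set l. if before l x y \<and> before r y x then -1 else (1::int))"
      by (rule prod.cartesian_product)
    also have "\<dots> = (\<Prod>p\<in>set l \<times> set l. if p \<in> Inv r l then -1 else 1)"
    proof (rule prod.cong[OF refl])
      fix p assume "p \<in> set l \<times> set l"
      obtain x y where p: "p = (x, y)" by (cases p)
      show "(case p of (x, y) \<Rightarrow> if before l x y \<and> before r y x then -1 else (1::int)) = (if p \<in> Inv r l then -1 else 1)"
        unfolding p Inv_def by simp
    qed
    finally show ?thesis .
  qed
  also have "\<dots> = (-1) ^ card (Inv r l)"
    by (rule prod_ind_card) (auto simp: Inv_def dest: before_set)
  finally show ?thesis unfolding lsign_def by simp
qed

lemma Wt_sum:
  "set v \<inter> set c = {} \<Longrightarrow> distinct v \<Longrightarrow> distinct c \<Longrightarrow>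
     (\<Sum>s\<in>shuffles v c. Wt v c s) = Gf (length v) (length c)"
proof (induction v c rule: shuffles.induct)
  case (1 ys) then show ?case by (simp add: Wt_def)
next
  case (2 xs) then show ?case by (cases xs) (simp_all add: Wt_def)
next
  case (3 a v b c)
  have ab: "a \<noteq> b" using "3.prems"(1) by auto
  have S: "shuffles (a # v) (b # c) = (#) a ` shuffles v (b # c) \<union> (#) b ` shuffles (a # v) c"
    by (rule shuffles.simps)
  have disj: "(#) a ` shuffles v (b # c) \<inter> (#) b ` shuffles (a # v) c = {}" using ab by auto
  have e1: "Wt (a # v) (b # c) (a # s) = (-1) ^ Suc (length c) * Wt v (b # c) s"
    if s: "s \<in> shuffles v (b # c)" for s
  proof -
    have ss: "set s = set v \<union> set (b # c)" using s by (rule set_shuffles)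
    have anv: "a \<notin> set v" using "3.prems"(2) by simp
    have "Wt (a # v) (b # c) (a # s) = (\<Prod>x\<in>set (b # c). if before (a # s) a x then -1 else 1) *
        (\<Prod>y\<in>set v. \<Prod>x\<in>set (b # c). if before (a # s) y x then -1 else 1)"
      unfolding Wt_def using anv by (simp add: prod.insert)
    also have "(\<Prod>x\<in>set (b # c). if before (a # s) a x then -1 else (1::int)) = (\<Prod>x\<in>set (b # c). -1)"
      by (rule prod.cong) (use ss in auto)
    also have "\<dots> = (-1) ^ Suc (length c)" using "3.prems"(3) by (simp add: distinct_card)
    also have "(\<Prod>y\<in>set v. \<Prod>x\<in>set (b # c). if before (a # s) y x then -1 else (1::int)) = Wt v (b # c) s"
      unfolding Wt_def by (rule prod.cong, simp, rule prod.cong) (use anv in auto)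
    finally show ?thesis .
  qed
  have e2: "Wt (a # v) (b # c) (b # s) = Wt (a # v) c s"
    if s: "s \<in> shuffles (a # v) c" for s
  proof -
    have ss: "set s = set (a # v) \<union> set c" using s by (rule set_shuffles)
    have bnc: "b \<notin> set c" using "3.prems"(3) by simp
    have bns: "b \<notin> set s" using ss bnc "3.prems"(1) by auto
    show ?thesis unfolding Wt_def
    proof (rule prod.cong[OF refl])
      fix y assume y: "y \<in> set (a # v)"
      then have yb: "y \<noteq> b" using "3.prems"(1) by auto
      have "(\<Prod>x\<in>set (b # c). if before (b # s) y x then -1 else (1::int))
          = (if before (b # s) y b then -1 else 1) * (\<Prod>x\<in>set c. if before (b # s) y x then -1 else 1)"
        using bnc by (simp add: prod.insert)
      also have "(if before (b # s) y b then -1 else (1::int)) = 1" using yb bns by (auto dest: before_set)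
      also have "(\<Prod>x\<in>set c. if before (b # s) y x then -1 else (1::int)) = (\<Prod>x\<in>set c. if before s y x then -1 else 1)"
        using yb by simp
      finally show "(\<Prod>x\<in>set (b # c). if before (b # s) y x then -1 else (1::int)) = (\<Prod>x\<in>set c. if before s y x then -1 else 1)"
        by simp
    qed
  qed
  have "(\<Sum>s\<in>shuffles (a # v) (b # c). Wt (a # v) (b # c) s)
      = (\<Sum>s\<in>(#) a ` shuffles v (b # c). Wt (a # v) (b # c) s) + (\<Sum>s\<in>(#) b ` shuffles (a # v) c. Wt (a # v) (b # c) s)"
    unfolding S by (rule sum.union_disjoint) (use disj in auto)
  also have "(\<Sum>s\<in>(#) a ` shuffles v (b # c). Wt (a # v) (b # c) s) = (\<Sum>s\<in>shuffles v (b # c). Wt (a # v) (b # c) (a # s))"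
    by (subst sum.reindex) (auto simp: inj_on_def)
  also have "\<dots> = (\<Sum>s\<in>shuffles v (b # c). (-1) ^ Suc (length c) * Wt v (b # c) s)"
    by (rule sum.cong) (auto simp: e1)
  also have "\<dots> = (-1) ^ Suc (length c) * (\<Sum>s\<in>shuffles v (b # c). Wt v (b # c) s)"
    by (simp only: sum_distrib_left)
  also have "(\<Sum>s\<in>shuffles v (b # c). Wt v (b # c) s) = Gf (length v) (length (b # c))"
    using "3.prems" by (intro "3.IH"(1)) auto
  also have "(\<Sum>s\<in>(#) b ` shuffles (a # v) c. Wt (a # v) (b # c) s) = (\<Sum>s\<in>shuffles (a # v) c. Wt (a # v) (b # c) (b # s))"
    by (subst sum.reindex) (auto simp: inj_on_def)
  also have "\<dots> = (\<Sum>s\<in>shuffles (a # v) c. Wt (a # v) c s)"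
    by (rule sum.cong) (auto simp: e2)
  also have "\<dots> = Gf (length (a # v)) (length c)"
    using "3.IH"(2) "3.prems" by simp
  finally show ?case by simp
qed

lemma prod_split4:
  fixes f :: "'a \<Rightarrow> 'a \<Rightarrow> int"
  assumes "finite A" "finite C" "A \<inter> C = {}"
  shows "(\<Prod>x\<in>A \<union> C. \<Prod>y\<in>A \<union> C. f x y) =
    (\<Prod>x\<in>A. \<Prod>y\<in>A. f x y) * (\<Prod>x\<in>A. \<Prod>y\<in>C. f x y) * ((\<Prod>x\<in>C. \<Prod>y\<in>A. f x y) * (\<Prod>x\<in>C. \<Prod>y\<in>C. f x y))"
proof -
  have i: "\<And>x. (\<Prod>y\<in>A \<union> C. f x y) = (\<Prod>y\<in>A. f x y) * (\<Prod>y\<in>C. f x y)"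
    using assms by (rule prod.union_disjoint)
  have "(\<Prod>x\<in>A \<union> C. \<Prod>y\<in>A \<union> C. f x y) = (\<Prod>x\<in>A. \<Prod>y\<in>A \<union> C. f x y) * (\<Prod>x\<in>C. \<Prod>y\<in>A \<union> C. f x y)"
    using assms by (rule prod.union_disjoint)
  also have "\<dots> = (\<Prod>x\<in>A. (\<Prod>y\<in>A. f x y) * (\<Prod>y\<in>C. f x y)) * (\<Prod>x\<in>C. (\<Prod>y\<in>A. f x y) * (\<Prod>y\<in>C. f x y))"
    by (simp only: i)
  also have "\<dots> = (\<Prod>x\<in>A. \<Prod>y\<in>A. f x y) * (\<Prod>x\<in>A. \<Prod>y\<in>C. f x y) * ((\<Prod>x\<in>C. \<Prod>y\<in>A. f x y) * (\<Prod>x\<in>C. \<Prod>y\<in>C. f x y))"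
    by (simp only: prod.distrib)
  finally show ?thesis .
qed

context core begin

lemma lsign_decomp:
  assumes ok: "chainok c" and dr: "distinct (A @ c @ B)" and AB: "set A \<union> set B = Ob"
    and t: "\<tau> \<in> VO" and s: "s \<in> shuffles (vL Lo Hi \<tau>) c"
  shows "lsign (A @ c @ B) (uL Lo \<tau> @ s @ wL Hi \<tau>) =
    lsign (A @ B) \<tau> * (-1) ^ (length c * (length A + length (uL Lo \<tau>))) * Wt (vL Lo Hi \<tau>) c s"
proof -
  let ?u = "uL Lo \<tau>" and ?v = "vL Lo Hi \<tau>" and ?w = "wL Hi \<tau>"
  define l where "l = ?u @ s @ ?w"
  define r where "r = A @ c @ B"
  define f where "f = (\<lambda>x y. if before l x y \<and> before r y x then -1 else (1::int))"
  have dc: "distinct c" and cO: "set c \<inter> Ob = {}"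
    and cR: "\<And>x y. x \<in> set c \<Longrightarrow> y \<in> set c \<Longrightarrow> R x y \<longleftrightarrow> before c x y"
    using ok unfolding chainok_def by auto
  have lV: "l \<in> Vc c" unfolding l_def by (rule into(1)[OF ok t s])
  have fl: "filter (\<lambda>x. x \<in> Ob) l = \<tau>" unfolding l_def by (rule into(2)[OF ok t s])
  have dl: "distinct l" and sl: "set l = Ob \<union> set c" and srt: "sorted_wrt R l"
    using lV unfolding Vc_def by auto
  have tb: "distinct \<tau>" "set \<tau> = Ob" "sorted_wrt R \<tau>" using VO_basic[OF t] by auto
  have dec: "\<tau> = ?u @ ?v @ ?w" by (rule decomp[OF t])
  have duvw: "distinct (?u @ ?v @ ?w)" by (rule VO_parts(1)[OF t])
  have un: "set ?u \<union> set ?v \<union> set ?w = Ob"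
  proof -
    have "set \<tau> = set (?u @ ?v @ ?w)" using dec by (rule arg_cong)
    then show ?thesis using tb(2) by (simp add: Un_assoc)
  qed
  have ss: "set s = set ?v \<union> set c" using s by (rule set_shuffles)
  have finO: "finite Ob" using tb(2) by auto
  have AO: "set A \<subseteq> Ob" "set B \<subseteq> Ob" using AB by auto
  have dA: "distinct A" and ABd: "set A \<inter> set B = {}" using dr by auto
  have fr: "filter (\<lambda>x. x \<in> Ob) r = A @ B"
  proof -
    have "filter (\<lambda>x. x \<in> Ob) A = A" "filter (\<lambda>x. x \<in> Ob) B = B" using AO by (auto simp: filter_id_conv)
    moreover have "filter (\<lambda>x. x \<in> Ob) c = []" using cO by (auto simp: filter_empty_conv)
    ultimately show ?thesis unfolding r_def by simp
  qed
  have frc: "filter (\<lambda>x. x \<in> set c) r = c"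
  proof -
    have "filter (\<lambda>x. x \<in> set c) A = []" "filter (\<lambda>x. x \<in> set c) B = []" using AO cO by (auto simp: filter_empty_conv)
    then show ?thesis unfolding r_def by simp
  qed
  have "lsign r l = (\<Prod>x\<in>Ob \<union> set c. \<Prod>y\<in>Ob \<union> set c. f x y)"
    unfolding lsign_prod f_def sl ..
  also have "\<dots> = (\<Prod>x\<in>Ob. \<Prod>y\<in>Ob. f x y) * (\<Prod>x\<in>Ob. \<Prod>y\<in>set c. f x y) * ((\<Prod>x\<in>set c. \<Prod>y\<in>Ob. f x y) * (\<Prod>x\<in>set c. \<Prod>y\<in>set c. f x y))"
    using finO cO by (intro prod_split4) auto
  finally have split: "lsign r l = (\<Prod>x\<in>Ob. \<Prod>y\<in>Ob. f x y) * (\<Prod>x\<in>Ob. \<Prod>y\<in>set c. f x y) * ((\<Prod>x\<in>set c. \<Prod>y\<in>Ob. f x y) * (\<Prod>x\<in>set c. \<Prod>y\<in>set c. f x y))" .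
  have CC: "(\<Prod>x\<in>set c. \<Prod>y\<in>set c. f x y) = 1"
  proof (intro prod.neutral ballI)
    fix x y assume x: "x \<in> set c" and y: "y \<in> set c"
    show "f x y = 1"
    proof (cases "before l x y \<and> before r y x")
      case True
      then have "R x y" using srt unfolding sorted_wrt_before by blast
      then have "before c x y" using cR[OF x y] by simp
      moreover have "before c y x" using True frc before_filter[of "\<lambda>z. z \<in> set c" y x r] x y by simp
      ultimately show ?thesis using before_distinct_asym[OF dc] by blast
    qed (simp add: f_def)
  qed
  have OO: "(\<Prod>x\<in>Ob. \<Prod>y\<in>Ob. f x y) = lsign (A @ B) \<tau>"
    unfolding lsign_prod tb(2)[symmetric]
  proof (intro prod.cong refl)
    fix x y assume x: "x \<in> set \<tau>" and y: "y \<in> set \<tau>"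
    have "before l x y \<longleftrightarrow> before \<tau> x y" using x y tb(2) fl before_filter[of "\<lambda>z. z \<in> Ob" x y l] by simp
    moreover have "before r y x \<longleftrightarrow> before (A @ B) y x" using x y tb(2) fr before_filter[of "\<lambda>z. z \<in> Ob" y x r] by simp
    ultimately show "f x y = (if before \<tau> x y \<and> before (A @ B) y x then -1 else 1)" unfolding f_def by simp
  qed
  have "(\<Prod>x\<in>Ob. \<Prod>y\<in>set c. f x y) * (\<Prod>x\<in>set c. \<Prod>y\<in>Ob. f x y)
      = (\<Prod>x\<in>Ob. \<Prod>y\<in>set c. f x y * f y x)"
    by (simp add: prod.distrib prod.swap[of _ "set c" Ob])
  also have "\<dots> = (\<Prod>x\<in>Ob. \<Prod>y\<in>set c. (if x \<in> set A then -1 else 1) * (if before l x y then -1 else 1))"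
  proof (intro prod.cong refl)
    fix x y assume x: "x \<in> Ob" and y: "y \<in> set c"
    have xc: "x \<notin> set c" using x cO by auto
    have yAB: "y \<notin> set A" "y \<notin> set B" using y dr by auto
    have b1: "before r x y \<longleftrightarrow> x \<in> set A"
      unfolding r_def using xc yAB y by (auto simp: before_append dest: before_set)
    have b2: "before r y x \<longleftrightarrow> x \<in> set B"
      unfolding r_def using xc yAB y by (auto simp: before_append dest: before_set)
    have xl: "x \<in> set l" "y \<in> set l" "x \<noteq> y" using x y sl xc by auto
    have b3: "before l y x \<longleftrightarrow> \<not> before l x y"
      using before_total[OF xl] before_distinct_asym[OF dl] by blast
    have xAB: "x \<in> set B \<longleftrightarrow> x \<notin> set A" using x AB ABd by auto
    show "f x y * f y x = (if x \<in> set A then -1 else 1) * (if before l x y then -1 else 1)"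
      unfolding f_def using b1 b2 b3 xAB by auto
  qed
  also have "\<dots> = (\<Prod>x\<in>Ob. (if x \<in> set A then -1 else 1) ^ card (set c)) * (\<Prod>x\<in>Ob. \<Prod>y\<in>set c. if before l x y then -1 else 1)"
    by (simp add: prod.distrib)
  also have "(\<Prod>x\<in>Ob. (if x \<in> set A then -1 else (1::int)) ^ card (set c)) = ((-1) ^ length A) ^ length c"
  proof -
    have "(\<Prod>x\<in>Ob. (if x \<in> set A then -1 else (1::int)) ^ card (set c)) = (\<Prod>x\<in>Ob. (if x \<in> set A then -1 else (1::int))) ^ card (set c)"
      by (simp add: prod_power_distrib)
    also have "(\<Prod>x\<in>Ob. (if x \<in> set A then -1 else (1::int))) = (-1) ^ card (set A)"
      by (rule prod_ind_card[OF finO AO(1)])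
    finally show ?thesis using dA dc by (simp add: distinct_card)
  qed
  also have "(\<Prod>x\<in>Ob. \<Prod>y\<in>set c. if before l x y then -1 else (1::int)) = (-1) ^ (length c * length ?u) * Wt ?v c s"
  proof -
    have Ob3: "Ob = set ?u \<union> (set ?v \<union> set ?w)" using un by auto
    have d1: "set ?u \<inter> (set ?v \<union> set ?w) = {}" "set ?v \<inter> set ?w = {}" using duvw by auto
    let ?g = "\<lambda>x. \<Prod>y\<in>set c. if before l x y then -1 else (1::int)"
    have "(\<Prod>x\<in>Ob. ?g x) = (\<Prod>x\<in>set ?u. ?g x) * ((\<Prod>x\<in>set ?v. ?g x) * (\<Prod>x\<in>set ?w. ?g x))"
      unfolding Ob3 using d1 by (simp add: prod.union_disjoint)
    also have "(\<Prod>x\<in>set ?u. ?g x) = (\<Prod>x\<in>set ?u. (-1) ^ length c)"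
    proof (rule prod.cong[OF refl])
      fix x assume x: "x \<in> set ?u"
      have "?g x = (\<Prod>y\<in>set c. -1)"
      proof (rule prod.cong[OF refl])
        fix y assume "y \<in> set c"
        then have "y \<in> set (s @ ?w)" using ss by auto
        then have "before l x y" unfolding l_def using x by (simp add: before_append)
        then show "(if before l x y then -1 else (1::int)) = -1" by simp
      qed
      then show "?g x = (-1) ^ length c" using dc by (simp add: distinct_card)
    qed
    also have "\<dots> = (-1) ^ (length c * length ?u)"
      using duvw by (simp add: distinct_card power_mult)
    also have "(\<Prod>x\<in>set ?w. ?g x) = 1"
    proof (rule prod.neutral, intro ballI)
      fix x assume x: "x \<in> set ?w"
      have xn: "x \<notin> set ?u" "x \<notin> set s" using x duvw ss cO un by auto
      show "?g x = 1"
      proof (intro prod.neutral ballI)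
        fix y assume y: "y \<in> set c"
        have "y \<notin> set ?w" using y cO un by auto
        then have "\<not> before l x y" unfolding l_def using xn
          by (auto simp: before_append dest: before_set)
        then show "(if before l x y then -1 else (1::int)) = 1" by simp
      qed
    qed
    also have "(\<Prod>x\<in>set ?v. ?g x) = Wt ?v c s"
      unfolding Wt_def
    proof (intro prod.cong refl)
      fix x y assume x: "x \<in> set ?v" and y: "y \<in> set c"
      have "x \<notin> set ?u" "y \<notin> set ?w" "x \<notin> set ?w" using x y duvw cO un by auto
      then have "before l x y \<longleftrightarrow> before s x y" unfolding l_def
        by (auto simp: before_append dest: before_set)
      then show "(if before l x y then -1 else (1::int)) = (if before s x y then -1 else 1)" by simp
    qed
    finally show ?thesis by simp
  qed
  finally have mix: "(\<Prod>x\<in>Ob. \<Prod>y\<in>set c. f x y) * (\<Prod>x\<in>set c. \<Prod>y\<in>Ob. f x y) = ((-1) ^ length A) ^ length c * ((-1) ^ (length c * length ?u) * Wt ?v c s)" .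
  have "lsign r l = lsign (A @ B) \<tau> * (((-1) ^ length A) ^ length c * ((-1) ^ (length c * length ?u) * Wt ?v c s))"
    unfolding split CC OO mix[symmetric] by (simp add: mult.assoc)
  also have "\<dots> = lsign (A @ B) \<tau> * (-1) ^ (length c * (length A + length ?u)) * Wt ?v c s"
  proof -
    have "(-1::int) ^ (length c * (length A + length ?u)) = ((-1) ^ length A) ^ length c * (-1) ^ (length c * length ?u)"
      by (simp add: distrib_left power_add power_mult[symmetric] mult.commute)
    then show ?thesis by (simp add: mult.assoc)
  qed
  finally show ?thesis unfolding l_def r_def .
qed

end

definition rowL :: "nat \<Rightarrow> nat \<Rightarrow> (nat \<times> nat) list" where
  "rowL i n = map (\<lambda>j. (i, j)) [1..<n + 1]"

lemma set_row: "set (rowL i n) = {i} \<times> {1..<n + 1}"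
  by (simp only: rowL_def set_map set_upt) auto

lemma set_rows: "set (concat (map (\<lambda>i. rowL i (f i)) I)) = (SIGMA i:set I. {1..<f i + 1})"
  by (simp only: set_concat set_map set_row image_image) auto

lemma distinct_row: "distinct (rowL i n)"
  unfolding rowL_def by (simp add: distinct_map inj_on_def)

lemma distinct_rows: "distinct I \<Longrightarrow> distinct (concat (map (\<lambda>i. rowL i (f i)) I))"
proof (induction I)
  case Nil then show ?case by simp
next
  case (Cons a I)
  have "set (rowL a (f a)) \<inter> set (concat (map (\<lambda>i. rowL i (f i)) I)) = {}"
    using Cons.prems unfolding set_rows set_row by auto
  then show ?case using Cons distinct_row by simp
qed

lemma before_row: "before (rowL i n) x y \<longleftrightarrow> x \<in> set (rowL i n) \<and> y \<in> set (rowL i n) \<and> snd x < snd y"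
proof -
  have srt: "sorted_wrt (\<lambda>x y. snd x < snd y) (rowL i n)"
    unfolding rowL_def sorted_wrt_map by (simp del: upt_Suc)
  have S: "\<And>a b. before (rowL i n) a b \<Longrightarrow> snd a < snd b"
    using srt unfolding sorted_wrt_before by blast
  show ?thesis
  proof
    assume b: "before (rowL i n) x y"
    show "x \<in> set (rowL i n) \<and> y \<in> set (rowL i n) \<and> snd x < snd y"
      using before_set[OF b] S[OF b] by blast
  next
    assume a: "x \<in> set (rowL i n) \<and> y \<in> set (rowL i n) \<and> snd x < snd y"
    then have xs: "x \<in> set (rowL i n)" "y \<in> set (rowL i n)" and sxy: "snd x < snd y" by auto
    have ne: "x \<noteq> y" using sxy by (metis less_irrefl)
    have "\<not> before (rowL i n) y x" using S sxy by (metis less_asym)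
    then show "before (rowL i n) x y" using before_total[OF xs ne] by blast
  qed
qed

locale setting =
  fixes le0 :: "nat \<Rightarrow> nat \<Rightarrow> bool" and m0 i0 :: nat and m :: "nat \<Rightarrow> nat"
  assumes refl: "\<And>x. x \<in> {1..m0} \<Longrightarrow> le0 x x"
    and antisym: "\<And>x y. x \<in> {1..m0} \<Longrightarrow> y \<in> {1..m0} \<Longrightarrow> le0 x y \<Longrightarrow> le0 y x \<Longrightarrow> x = y"
    and trans: "\<And>x y z. x \<in> {1..m0} \<Longrightarrow> y \<in> {1..m0} \<Longrightarrow> z \<in> {1..m0} \<Longrightarrow>
                  le0 x y \<Longrightarrow> le0 y z \<Longrightarrow> le0 x z"
    and i0: "i0 \<in> {1..m0}"
begin

definition "Alist = concat (map (\<lambda>i. rowL i (m i)) [1..<i0])"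
definition "Blist = concat (map (\<lambda>i. rowL i (m i)) [Suc i0..<m0 + 1])"
definition "Ck k = rowL i0 k"
definition "Obs = set Alist \<union> set Blist"
definition "Rr x y = (\<not> lexsum_le le0 y x)"
definition "Los = {y \<in> Obs. le0 (fst y) i0}"
definition "His = {y \<in> Obs. le0 i0 (fst y)}"

lemma ref_split: "ref_order m0 (m(i0 := k)) = Alist @ Ck k @ Blist"
proof -
  have e: "i0 + (m0 + 1 - i0) = m0 + 1" using i0 by simp
  have "[1..<i0 + (m0 + 1 - i0)] = [1..<i0] @ [i0..<i0 + (m0 + 1 - i0)]"
    using i0 by (intro upt_add_eq_append) simp
  then have u1: "[1..<m0 + 1] = [1..<i0] @ [i0..<m0 + 1]" unfolding e .
  have u2: "[i0..<m0 + 1] = i0 # [Suc i0..<m0 + 1]"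
    using i0 by (intro upt_conv_Cons) simp
  have u: "[1..<m0 + 1] = [1..<i0] @ i0 # [Suc i0..<m0 + 1]" unfolding u1 u2 ..
  have a: "map (\<lambda>i. map (\<lambda>j. (i, j)) [1..<(m(i0 := k)) i + 1]) [1..<i0] = map (\<lambda>i. rowL i (m i)) [1..<i0]"
    unfolding rowL_def by (rule map_cong) auto
  have b: "map (\<lambda>i. map (\<lambda>j. (i, j)) [1..<(m(i0 := k)) i + 1]) [Suc i0..<m0 + 1] = map (\<lambda>i. rowL i (m i)) [Suc i0..<m0 + 1]"
    unfolding rowL_def by (rule map_cong) auto
  show ?thesis unfolding ref_order_def u Alist_def Blist_def Ck_def
    by (simp only: map_append list.map concat_append concat.simps a b) (simp add: rowL_def)
qed

lemma setA: "set Alist = (SIGMA i:{1..<i0}. {1..<m i + 1})"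
  unfolding Alist_def set_rows by (simp del: upt_Suc)

lemma setB: "set Blist = (SIGMA i:{Suc i0..<m0 + 1}. {1..<m i + 1})"
  unfolding Blist_def set_rows by (simp del: upt_Suc)

lemma setC: "set (Ck k) = {i0} \<times> {1..<k + 1}"
  unfolding Ck_def set_row by simp

lemma Obs_eq: "Obs = (SIGMA i:{1..m0} - {i0}. {1..<m i + 1})"
  unfolding Obs_def setA setB using i0 by auto

lemma distinct_ref: "distinct (Alist @ Ck k @ Blist)"
  unfolding ref_split[symmetric] ref_order_def
  using distinct_rows[of "[1..<m0 + 1]" "m(i0 := k)"] unfolding rowL_def by simp

lemma finite_Obs: "finite Obs" unfolding Obs_def by simp

lemma core_inst: "core Rr Obs Los His"
proof
  show "Los \<subseteq> Obs" "His \<subseteq> Obs" unfolding Los_def His_def by auto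
  show "Los \<inter> His = {}"
  proof -
    { fix y assume y: "y \<in> Los" "y \<in> His"
      then have "fst y \<in> {1..m0}" "fst y \<noteq> i0" unfolding Los_def Obs_eq by auto
      moreover have "le0 (fst y) i0" "le0 i0 (fst y)" using y unfolding Los_def His_def by auto
      ultimately have False using antisym i0 by blast }
    then show ?thesis by blast
  qed
  fix y z assume y: "y \<in> Los" and z: "z \<in> His"
  have yy: "fst y \<in> {1..m0}" "fst y \<noteq> i0" "le0 (fst y) i0" using y unfolding Los_def Obs_eq by auto
  have zz: "fst z \<in> {1..m0}" "fst z \<noteq> i0" "le0 i0 (fst z)" using z unfolding His_def Obs_eq by auto
  have ne: "fst y \<noteq> fst z"
  proof
    assume "fst y = fst z"
    then show False using antisym[OF yy(1) i0 yy(3)] zz(3) yy(2) by simp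
  qed
  have "le0 (fst y) (fst z)" using trans[OF yy(1) i0 zz(1) yy(3) zz(3)] .
  then show "\<not> Rr z y" unfolding Rr_def lexsum_le_def using ne by simp
qed

lemma chainok_inst: "core.chainok Rr Obs Los His (Ck k)"
proof -
  interpret core Rr Obs Los His by (rule core_inst)
  show ?thesis unfolding chainok_def
  proof (intro conjI ballI)
    show "distinct (Ck k)" unfolding Ck_def by (rule distinct_row)
    show "set (Ck k) \<inter> Obs = {}" unfolding setC Obs_eq by auto
  next
    fix x y assume x: "x \<in> set (Ck k)" and y: "y \<in> set (Ck k)"
    have "fst x = i0" "fst y = i0" using x y unfolding setC by auto
    then show "Rr x y = before (Ck k) x y"
      unfolding Rr_def lexsum_le_def Ck_def before_row using x y unfolding Ck_def by auto
  next
    fix y x assume y: "y \<in> Obs" and x: "x \<in> set (Ck k)"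
    have "fst x = i0" "fst y \<noteq> i0" using x y unfolding setC Obs_eq by auto
    then show "Rr y x = (y \<notin> His)" unfolding Rr_def lexsum_le_def His_def using y by auto
  next
    fix y x assume y: "y \<in> Obs" and x: "x \<in> set (Ck k)"
    have "fst x = i0" "fst y \<noteq> i0" using x y unfolding setC Obs_eq by auto
    then show "Rr x y = (y \<notin> Los)" unfolding Rr_def lexsum_le_def Los_def using y by auto
  qed
qed

lemma islin_iff:
  fixes k :: nat and r defines "r \<equiv> ref_order m0 (m(i0 := k))"
  shows "is_linearization le0 m0 (m(i0 := k)) \<sigma> \<longleftrightarrow> \<sigma> permutes {..<length r} \<and> sorted_wrt Rr (permute_list \<sigma> r)"
proof -
  have nth: "\<And>j. j < length r \<Longrightarrow> permute_list \<sigma> r ! j = r ! \<sigma> j" by (simp add: permute_list_def)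
  have "(\<forall>a<length r. \<forall>b<length r. lexsum_le le0 (r ! \<sigma> a) (r ! \<sigma> b) \<longrightarrow> a \<le> b)
      \<longleftrightarrow> (\<forall>i j. i < j \<longrightarrow> j < length r \<longrightarrow> Rr (permute_list \<sigma> r ! i) (permute_list \<sigma> r ! j))"
  proof
    assume h: "\<forall>a<length r. \<forall>b<length r. lexsum_le le0 (r ! \<sigma> a) (r ! \<sigma> b) \<longrightarrow> a \<le> b"
    show "\<forall>i j. i < j \<longrightarrow> j < length r \<longrightarrow> Rr (permute_list \<sigma> r ! i) (permute_list \<sigma> r ! j)"
    proof (intro allI impI)
      fix i j assume ij: "i < j" "j < length r"
      then have "\<not> lexsum_le le0 (r ! \<sigma> j) (r ! \<sigma> i)" using h by (meson less_trans not_le)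
      then show "Rr (permute_list \<sigma> r ! i) (permute_list \<sigma> r ! j)" unfolding Rr_def using nth ij by simp
    qed
  next
    assume h: "\<forall>i j. i < j \<longrightarrow> j < length r \<longrightarrow> Rr (permute_list \<sigma> r ! i) (permute_list \<sigma> r ! j)"
    show "\<forall>a<length r. \<forall>b<length r. lexsum_le le0 (r ! \<sigma> a) (r ! \<sigma> b) \<longrightarrow> a \<le> b"
    proof (intro allI impI)
      fix a b assume ab: "a < length r" "b < length r" "lexsum_le le0 (r ! \<sigma> a) (r ! \<sigma> b)"
      show "a \<le> b"
      proof (rule ccontr)
        assume "\<not> a \<le> b"
        then have "b < a" by simp
        then have "Rr (permute_list \<sigma> r ! b) (permute_list \<sigma> r ! a)" using h ab by blast
        then show False unfolding Rr_def using nth ab by simp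
      qed
    qed
  qed
  then show ?thesis
    unfolding is_linearization_def Let_def r_def[symmetric] sorted_wrt_iff_nth_less by simp
qed

lemma lin_bij:
  fixes k :: nat and r defines "r \<equiv> ref_order m0 (m(i0 := k))"
  shows "bij_betw (\<lambda>\<sigma>. permute_list \<sigma> r) {\<sigma>. is_linearization le0 m0 (m(i0 := k)) \<sigma>} (core.Vc Rr Obs (Ck k))"
proof -
  interpret core Rr Obs Los His by (rule core_inst)
  have dr: "distinct r" unfolding r_def ref_split by (rule distinct_ref)
  have sr: "set r = Obs \<union> set (Ck k)" unfolding r_def ref_split Obs_def by auto
  show ?thesis
  proof (rule bij_betw_imageI)
    show "inj_on (\<lambda>\<sigma>. permute_list \<sigma> r) {\<sigma>. is_linearization le0 m0 (m(i0 := k)) \<sigma>}"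
    proof (rule inj_onI)
      fix \<sigma> \<sigma>' assume a: "\<sigma> \<in> {\<sigma>. is_linearization le0 m0 (m(i0 := k)) \<sigma>}" "\<sigma>' \<in> {\<sigma>. is_linearization le0 m0 (m(i0 := k)) \<sigma>}"
        and e: "permute_list \<sigma> r = permute_list \<sigma>' r"
      have p: "\<sigma> permutes {..<length r}" "\<sigma>' permutes {..<length r}" using a unfolding islin_iff r_def by auto
      show "\<sigma> = \<sigma>'"
      proof
        fix i show "\<sigma> i = \<sigma>' i"
        proof (cases "i < length r")
          case True
          have "r ! \<sigma> i = r ! \<sigma>' i" using arg_cong[OF e, of "\<lambda>l. l ! i"] True by (simp add: permute_list_def)
          moreover have "\<sigma> i < length r" "\<sigma>' i < length r"
            using permutes_in_image[OF p(1), of i] permutes_in_image[OF p(2), of i] True by auto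
          ultimately show ?thesis using dr by (simp add: nth_eq_iff_index_eq)
        next
          case False then show ?thesis using p by (simp add: permutes_not_in)
        qed
      qed
    qed
    show "(\<lambda>\<sigma>. permute_list \<sigma> r) ` {\<sigma>. is_linearization le0 m0 (m(i0 := k)) \<sigma>} = Vc (Ck k)"
    proof
      show "(\<lambda>\<sigma>. permute_list \<sigma> r) ` {\<sigma>. is_linearization le0 m0 (m(i0 := k)) \<sigma>} \<subseteq> Vc (Ck k)"
      proof
        fix l assume "l \<in> (\<lambda>\<sigma>. permute_list \<sigma> r) ` {\<sigma>. is_linearization le0 m0 (m(i0 := k)) \<sigma>}"
        then obtain \<sigma> where s: "is_linearization le0 m0 (m(i0 := k)) \<sigma>" and l: "l = permute_list \<sigma> r" by blast
        have p: "\<sigma> permutes {..<length r}" "sorted_wrt Rr (permute_list \<sigma> r)" using s unfolding islin_iff r_def by auto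
        show "l \<in> Vc (Ck k)" unfolding Vc_def l using p dr sr by simp
      qed
      show "Vc (Ck k) \<subseteq> (\<lambda>\<sigma>. permute_list \<sigma> r) ` {\<sigma>. is_linearization le0 m0 (m(i0 := k)) \<sigma>}"
      proof
        fix l assume l: "l \<in> Vc (Ck k)"
        then have dl: "distinct l" "set l = set r" "sorted_wrt Rr l" unfolding Vc_def sr by auto
        then have "mset l = mset r" using dr by (simp add: set_eq_iff_mset_eq_distinct)
        then obtain p where p: "p permutes {..<length r}" "permute_list p r = l" by (rule mset_eq_permutation)
        then have "is_linearization le0 m0 (m(i0 := k)) p" unfolding islin_iff r_def[symmetric] using dl by simp
        then show "l \<in> (\<lambda>\<sigma>. permute_list \<sigma> r) ` {\<sigma>. is_linearization le0 m0 (m(i0 := k)) \<sigma>}"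
          using p by blast
      qed
    qed
  qed
qed

end

sublocale setting \<subseteq> core Rr Obs Los His by (rule core_inst)

context setting begin

lemma finite_VO: "finite VO"
proof (rule finite_subset)
  show "VO \<subseteq> {xs. set xs \<subseteq> Obs \<and> length xs \<le> card Obs}"
  proof
    fix xs assume "xs \<in> VO"
    then have "distinct xs" "set xs = Obs" unfolding VO_def by auto
    then show "xs \<in> {xs. set xs \<subseteq> Obs \<and> length xs \<le> card Obs}" using distinct_card by fastforce
  qed
  show "finite {xs. set xs \<subseteq> Obs \<and> length xs \<le> card Obs}"
    by (rule finite_lists_length_le[OF finite_Obs])
qed

lemma length_Ck: "length (Ck k) = k" unfolding Ck_def rowL_def by simp

lemma v_disj: "\<tau> \<in> VO \<Longrightarrow> set (vL Los His \<tau>) \<inter> set (Ck k) = {} \<and> distinct (vL Los His \<tau>) \<and> distinct (Ck k)"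
proof -
  assume t: "\<tau> \<in> VO"
  have "set (vL Los His \<tau>) \<subseteq> Obs" by (rule VO_parts(6)[OF t])
  moreover have "set (Ck k) \<inter> Obs = {}" using chainok_inst[of k] unfolding chainok_def by auto
  moreover have "distinct (vL Los His \<tau>)" using VO_parts(1)[OF t] by simp
  moreover have "distinct (Ck k)" using chainok_inst[of k] unfolding chainok_def by auto
  ultimately show ?thesis by auto
qed

lemma L_plus_eq:
  "L_plus le0 m0 (m(i0 := k)) = (\<Sum>\<tau>\<in>VO. (length (vL Los His \<tau>) + k) choose length (vL Los His \<tau>))"
proof -
  have "L_plus le0 m0 (m(i0 := k)) = card (Vc (Ck k))"
    unfolding L_plus_def by (rule bij_betw_same_card[OF lin_bij])
  also have "\<dots> = card (SIGMA \<tau>:VO. shuffles (vL Los His \<tau>) (Ck k))"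
    by (rule bij_betw_same_card[OF core_bij[OF chainok_inst], symmetric])
  also have "\<dots> = (\<Sum>\<tau>\<in>VO. card (shuffles (vL Los His \<tau>) (Ck k)))"
    using finite_VO by (simp add: card_SigmaI)
  also have "\<dots> = (\<Sum>\<tau>\<in>VO. (length (vL Los His \<tau>) + k) choose length (vL Los His \<tau>))"
  proof (rule sum.cong[OF HOL.refl])
    fix \<tau> assume t: "\<tau> \<in> VO"
    show "card (shuffles (vL Los His \<tau>) (Ck k)) = (length (vL Los His \<tau>) + k) choose length (vL Los His \<tau>)"
      using card_disjoint_shuffles[of "vL Los His \<tau>" "Ck k"] v_disj[OF t, of k] length_Ck[of k] by simp
  qed
  finally show ?thesis .
qed

lemma L_minus_eq:
  "L_minus le0 m0 (m(i0 := k)) = (\<Sum>\<tau>\<in>VO. lsign (Alist @ Blist) \<tau> * (-1) ^ (k * (length Alist + length (uL Los \<tau>))) * Gf (length (vL Los His \<tau>)) k)"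
proof -
  let ?r = "ref_order m0 (m(i0 := k))"
  have dr: "distinct ?r" unfolding ref_split by (rule distinct_ref)
  have "L_minus le0 m0 (m(i0 := k)) = (\<Sum>\<sigma>\<in>{\<sigma>. is_linearization le0 m0 (m(i0 := k)) \<sigma>}. lsign ?r (permute_list \<sigma> ?r))"
    unfolding L_minus_def
  proof (rule sum.cong[OF HOL.refl])
    fix \<sigma> assume "\<sigma> \<in> {\<sigma>. is_linearization le0 m0 (m(i0 := k)) \<sigma>}"
    then have "\<sigma> permutes {..<length ?r}" using islin_iff by blast
    then show "sign \<sigma> = lsign ?r (permute_list \<sigma> ?r)" by (rule sign_lsign[OF dr])
  qed
  also have "\<dots> = (\<Sum>l\<in>Vc (Ck k). lsign ?r l)"
    by (rule sum.reindex_bij_betw[OF lin_bij])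
  also have "\<dots> = (\<Sum>p\<in>(SIGMA \<tau>:VO. shuffles (vL Los His \<tau>) (Ck k)). lsign ?r ((\<lambda>(\<tau>, s). uL Los \<tau> @ s @ wL His \<tau>) p))"
    by (rule sum.reindex_bij_betw[OF core_bij[OF chainok_inst], symmetric])
  also have "\<dots> = (\<Sum>\<tau>\<in>VO. \<Sum>s\<in>shuffles (vL Los His \<tau>) (Ck k). lsign ?r (uL Los \<tau> @ s @ wL His \<tau>))"
  proof -
    have "(\<Sum>p\<in>(SIGMA \<tau>:VO. shuffles (vL Los His \<tau>) (Ck k)). lsign ?r ((\<lambda>(\<tau>, s). uL Los \<tau> @ s @ wL His \<tau>) p))
       = (\<Sum>(\<tau>, s)\<in>(SIGMA \<tau>:VO. shuffles (vL Los His \<tau>) (Ck k)). lsign ?r (uL Los \<tau> @ s @ wL His \<tau>))"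
      by (rule sum.cong[OF HOL.refl]) (simp split: prod.splits)
    also have "\<dots> = (\<Sum>\<tau>\<in>VO. \<Sum>s\<in>shuffles (vL Los His \<tau>) (Ck k). lsign ?r (uL Los \<tau> @ s @ wL His \<tau>))"
      by (rule sum.Sigma[symmetric]) (use finite_VO in auto)
    finally show ?thesis .
  qed
  also have "\<dots> = (\<Sum>\<tau>\<in>VO. \<Sum>s\<in>shuffles (vL Los His \<tau>) (Ck k).
      lsign (Alist @ Blist) \<tau> * (-1) ^ (k * (length Alist + length (uL Los \<tau>))) * Wt (vL Los His \<tau>) (Ck k) s)"
  proof (intro sum.cong HOL.refl)
    fix \<tau> s assume t: "\<tau> \<in> VO" and s: "s \<in> shuffles (vL Los His \<tau>) (Ck k)"
    show "lsign ?r (uL Los \<tau> @ s @ wL His \<tau>) = lsign (Alist @ Blist) \<tau> * (-1) ^ (k * (length Alist + length (uL Los \<tau>))) * Wt (vL Los His \<tau>) (Ck k) s"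
      unfolding ref_split using lsign_decomp[OF chainok_inst distinct_ref _ t s] length_Ck[of k] Obs_def by simp
  qed
  also have "\<dots> = (\<Sum>\<tau>\<in>VO. lsign (Alist @ Blist) \<tau> * (-1) ^ (k * (length Alist + length (uL Los \<tau>))) * Gf (length (vL Los His \<tau>)) k)"
  proof (rule sum.cong[OF HOL.refl])
    fix \<tau> assume t: "\<tau> \<in> VO"
    have "(\<Sum>s\<in>shuffles (vL Los His \<tau>) (Ck k). Wt (vL Los His \<tau>) (Ck k) s) = Gf (length (vL Los His \<tau>)) k"
      using Wt_sum[of "vL Los His \<tau>" "Ck k"] v_disj[OF t, of k] length_Ck[of k] by simp
    then show "(\<Sum>s\<in>shuffles (vL Los His \<tau>) (Ck k). lsign (Alist @ Blist) \<tau> * (-1) ^ (k * (length Alist + length (uL Los \<tau>))) * Wt (vL Los His \<tau>) (Ck k) s)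
      = lsign (Alist @ Blist) \<tau> * (-1) ^ (k * (length Alist + length (uL Los \<tau>))) * Gf (length (vL Los His \<tau>)) k"
      by (simp add: sum_distrib_left[symmetric])
  qed
  finally show ?thesis .
qed

end

context setting begin

definition "cls i = (if le0 i i0 then 0 else if le0 i0 i then 2 else (1::nat))"
definition "dn i = card {i' \<in> {1..m0}. le0 i' i}"
definition "key (x :: nat \<times> nat) = (cls (fst x), dn (fst x), fst x, snd x)"

lemma key_inj: "inj_on key A"
  unfolding key_def inj_on_def by auto

lemma Obs_mem: "x \<in> Obs \<Longrightarrow> fst x \<in> {1..m0} \<and> fst x \<noteq> i0"
  unfolding Obs_eq by auto

lemma key_mono:
  assumes x: "x \<in> Obs" and y: "y \<in> Obs" and ne: "x \<noteq> y" and le: "lexsum_le le0 y x"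
  shows "key y < key x"
proof -
  obtain a b where ab: "a = fst y" "b = fst x" by blast
  have a: "a \<in> {1..m0}" "a \<noteq> i0" and b: "b \<in> {1..m0}" "b \<noteq> i0" using Obs_mem[OF x] Obs_mem[OF y] ab by auto
  consider "a \<noteq> b" "le0 a b" | "a = b" "snd y \<le> snd x" using le ab unfolding lexsum_le_def by auto
  then show ?thesis
  proof cases
    case 1
    have cl: "cls a \<le> cls b"
    proof -
      have "le0 b i0 \<Longrightarrow> le0 a i0" using trans[OF a(1) b(1) i0 1(2)] by blast
      moreover have "le0 i0 a \<Longrightarrow> le0 i0 b" using trans[OF i0 a(1) b(1) _ 1(2)] by blast
      ultimately show ?thesis unfolding cls_def by auto
    qed
    have dd: "dn a < dn b"
    proof -
      have sub: "{i' \<in> {1..m0}. le0 i' a} \<subseteq> {i' \<in> {1..m0}. le0 i' b}"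
        using trans a(1) b(1) 1(2) by blast
      have "b \<in> {i' \<in> {1..m0}. le0 i' b}" using refl b(1) by blast
      moreover have "b \<notin> {i' \<in> {1..m0}. le0 i' a}" using antisym[OF a(1) b(1) 1(2)] 1(1) by blast
      ultimately have "{i' \<in> {1..m0}. le0 i' a} \<subset> {i' \<in> {1..m0}. le0 i' b}" using sub by blast
      then show ?thesis unfolding dn_def by (intro psubset_card_mono) auto
    qed
    show ?thesis unfolding key_def using cl dd ab by (auto simp: less_prod_def)
  next
    case 2
    have "snd y \<noteq> snd x" using ne 2(1) ab by (metis prod.collapse)
    then have "snd y < snd x" using 2(2) by simp
    then show ?thesis unfolding key_def using 2(1) ab by (auto simp: less_prod_def)
  qed
qed

definition "Inc = Obs - Los - His"

lemma exists_max: "\<exists>\<tau>\<in>VO. set (vL Los His \<tau>) = Inc"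
proof -
  interpret K: folding_insort_key "(\<le>) :: nat \<times> nat \<times> nat \<times> nat \<Rightarrow> _ \<Rightarrow> bool" "(<)" Obs key
    by unfold_locales (rule key_inj)
  define t where "t = linorder.sorted_key_list_of_set ((\<le>) :: nat \<times> nat \<times> nat \<times> nat \<Rightarrow> _ \<Rightarrow> bool) key Obs"
  have st: "set t = Obs" unfolding t_def by (rule K.set_sorted_key_list_of_set) (auto simp: finite_Obs)
  have sk: "sorted (map key t)" unfolding t_def by (rule K.sorted_sorted_key_list_of_set) simp
  have dk: "distinct (map key t)" unfolding t_def by (rule K.distinct_sorted_key_list_of_set) simp
  have dt: "distinct t" using dk by (simp add: distinct_map)
  have bk: "\<And>x y. before t x y \<Longrightarrow> key x < key y"
  proof -
    fix x y assume b: "before t x y"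
    have sw: "sorted_wrt (\<lambda>a b. key a \<le> key b) t" using sk by (simp add: sorted_wrt_map)
    have "key x \<le> key y" using sw b unfolding sorted_wrt_before by blast
    moreover have "x \<noteq> y" using b before_irrefl[OF dt] by blast
    then have "key x \<noteq> key y" using key_inj[of Obs] before_set[OF b] st unfolding inj_on_def by blast
    ultimately show "key x < key y" by simp
  qed
  have tV: "t \<in> VO"
    unfolding VO_def
  proof (intro CollectI conjI)
    show "distinct t" "set t = Obs" by (fact dt, fact st)
    show "sorted_wrt Rr t"
      unfolding sorted_wrt_before
    proof (intro allI impI)
      fix x y assume b: "before t x y"
      have xy: "x \<in> Obs" "y \<in> Obs" using before_set[OF b] st by auto
      have ne: "x \<noteq> y" using b before_irrefl[OF dt] by blast
      show "Rr x y" unfolding Rr_def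
      proof
        assume "lexsum_le le0 y x"
        then have "key y < key x" using key_mono[OF xy ne] by blast
        then show False using bk[OF b] by simp
      qed
    qed
  qed
  have "set (vL Los His t) = Inc"
  proof
    show "set (vL Los His t) \<subseteq> Inc" unfolding Inc_def using VO_parts(4,5,6)[OF tV] by auto
    show "Inc \<subseteq> set (vL Los His t)"
    proof
      fix x assume x: "x \<in> Inc"
      then have xO: "x \<in> Obs" and xL: "x \<notin> Los" and xH: "x \<notin> His" unfolding Inc_def by auto
      have clx: "cls (fst x) = 1" using xO xL xH unfolding cls_def Los_def His_def by auto
      have nU: "\<not> Upred Los t x"
      proof
        assume "Upred Los t x"
        then obtain lo where lo: "lo \<in> Los" "x = lo \<or> before t x lo" unfolding Upred_def by blast
        then have bl: "before t x lo" using xL by auto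
        have "cls (fst lo) = 0" using lo(1) unfolding cls_def Los_def by auto
        then have "key lo < key x" using clx unfolding key_def by (simp add: less_prod_def)
        then show False using bk[OF bl] by simp
      qed
      have nW: "\<not> Wpred His t x"
      proof
        assume "Wpred His t x"
        then obtain hi where hi: "hi \<in> His" "x = hi \<or> before t hi x" unfolding Wpred_def by blast
        then have bh: "before t hi x" using xH by auto
        have hO: "hi \<in> Obs" "le0 i0 (fst hi)" using hi(1) unfolding His_def by auto
        have "\<not> le0 (fst hi) i0" using antisym[OF _ i0 _ hO(2)] Obs_mem[OF hO(1)] by auto
        then have "cls (fst hi) = 2" using hO(2) unfolding cls_def by auto
        then have "key x < key hi" using clx unfolding key_def by (simp add: less_prod_def)
        then show False using bk[OF bh] by simp
      qed
      show "x \<in> set (vL Los His t)" unfolding vL_def using nU nW xO st by simp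
    qed
  qed
  then show ?thesis using tV by blast
qed

lemma v_le: "\<tau> \<in> VO \<Longrightarrow> length (vL Los His \<tau>) \<le> card Inc"
proof -
  assume t: "\<tau> \<in> VO"
  have "length (vL Los His \<tau>) = card (set (vL Los His \<tau>))"
    using VO_parts(1)[OF t] by (simp add: distinct_card)
  also have "\<dots> \<le> card Inc"
    unfolding Inc_def using VO_parts(4,5,6)[OF t] finite_Obs by (intro card_mono) auto
  finally show ?thesis .
qed

lemma D_card: "(\<Sum>i\<in>{i\<in>{1..m0}. i \<noteq> i0 \<and> \<not> le0 i i0 \<and> \<not> le0 i0 i}. m i) = card Inc"
proof -
  have "Inc = (SIGMA i:{i\<in>{1..m0}. i \<noteq> i0 \<and> \<not> le0 i i0 \<and> \<not> le0 i0 i}. {1..<m i + 1})"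
    unfolding Inc_def Obs_eq Los_def His_def by auto
  then have "card Inc = (\<Sum>i\<in>{i\<in>{1..m0}. i \<noteq> i0 \<and> \<not> le0 i i0 \<and> \<not> le0 i0 i}. card {1..<m i + 1})"
    by (simp add: card_SigmaI)
  then show ?thesis by simp
qed

end

context setting begin

lemma main:
  shows "(\<exists>f :: rat poly. degree f = card Inc \<and>
            (\<forall>k::nat. of_nat (L_plus le0 m0 (m(i0 := k))) = poly f (of_nat k)))
       \<and> (\<exists>(g0 :: rat poly) (g1 :: rat poly). degree g0 \<le> card Inc div 2 \<and> degree g1 \<le> card Inc div 2 \<and>
            (\<forall>k::nat. even k \<longrightarrow> of_int (L_minus le0 m0 (m(i0 := k))) = poly g0 (of_nat k)) \<and>
            (\<forall>k::nat. odd k \<longrightarrow> of_int (L_minus le0 m0 (m(i0 := k))) = poly g1 (of_nat k)))"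
proof (intro conjI)
  let ?w = "\<lambda>\<tau>. length (vL Los His \<tau>)"
  define f where "f = (\<Sum>\<tau>\<in>VO. bpoly (?w \<tau>))"
  have fe: "\<forall>k::nat. of_nat (L_plus le0 m0 (m(i0 := k))) = poly f (of_nat k)"
  proof
    fix k :: nat
    show "of_nat (L_plus le0 m0 (m(i0 := k))) = poly f (of_nat k)"
      unfolding L_plus_eq f_def poly_sum of_nat_sum by (simp add: bpoly_eval)
  qed
  have fd1: "degree f \<le> card Inc"
    unfolding f_def by (rule degree_sum_le[OF finite_VO]) (use bpoly_degree v_le in auto)
  obtain ts where ts: "ts \<in> VO" "set (vL Los His ts) = Inc" using exists_max by blast
  have wts: "?w ts = card Inc"
    using ts VO_parts(1)[OF ts(1)] by (metis distinct_append distinct_card)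
  have "coeff f (card Inc) = (\<Sum>\<tau>\<in>VO. coeff (bpoly (?w \<tau>)) (card Inc))"
    unfolding f_def by (rule coeff_sum)
  also have "\<dots> > 0"
  proof (rule sum_pos2[OF finite_VO ts(1)])
    have b1: "degree (bpoly (?w ts)) = ?w ts" and b2: "0 < coeff (bpoly (?w ts)) (degree (bpoly (?w ts)))"
      using bpoly_degree[of "?w ts"] by auto
    have "degree (bpoly (?w ts)) = card Inc" using b1 wts by simp
    then show "0 < coeff (bpoly (?w ts)) (card Inc)" using b2 by simp
    fix \<tau> assume t: "\<tau> \<in> VO"
    show "0 \<le> coeff (bpoly (?w \<tau>)) (card Inc)"
    proof (cases "?w \<tau> = card Inc")
      case True
      have b1: "degree (bpoly (?w \<tau>)) = ?w \<tau>" and b2: "0 < coeff (bpoly (?w \<tau>)) (degree (bpoly (?w \<tau>)))"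
        using bpoly_degree[of "?w \<tau>"] by auto
      have "degree (bpoly (?w \<tau>)) = card Inc" using b1 True by simp
      then show ?thesis using b2 by simp
    next
      case False
      then have "?w \<tau> < card Inc" using v_le[OF t] by simp
      then have "coeff (bpoly (?w \<tau>)) (card Inc) = 0" using bpoly_degree[of "?w \<tau>"] by (intro coeff_eq_0) simp
      then show ?thesis by simp
    qed
  qed
  finally have "coeff f (card Inc) \<noteq> 0" by simp
  then have fd2: "card Inc \<le> degree f" by (rule le_degree)
  show "\<exists>f :: rat poly. degree f = card Inc \<and> (\<forall>k::nat. of_nat (L_plus le0 m0 (m(i0 := k))) = poly f (of_nat k))"
    using fe fd1 fd2 by (intro exI[of _ f]) simp
  define e where "e = (\<lambda>\<tau>. length Alist + length (uL Los \<tau>))"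
  define g0 where "g0 = (\<Sum>\<tau>\<in>VO. smult (of_int (lsign (Alist @ Blist) \<tau>)) (Gpoly_even (?w \<tau>)))"
  define g1 where "g1 = (\<Sum>\<tau>\<in>VO. smult (of_int (lsign (Alist @ Blist) \<tau> * (-1) ^ e \<tau>)) (Gpoly_odd (?w \<tau>)))"
  have dg0: "degree g0 \<le> card Inc div 2"
    unfolding g0_def
  proof (rule degree_sum_le[OF finite_VO])
    fix \<tau> assume t: "\<tau> \<in> VO"
    have "degree (smult (of_int (lsign (Alist @ Blist) \<tau>)) (Gpoly_even (?w \<tau>))) \<le> degree (Gpoly_even (?w \<tau>))"
      by (rule degree_smult_le)
    also have "\<dots> \<le> ?w \<tau> div 2" by (rule Gpoly_even_degree)
    also have "\<dots> \<le> card Inc div 2" using v_le[OF t] by (rule div_le_mono)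
    finally show "degree (smult (of_int (lsign (Alist @ Blist) \<tau>)) (Gpoly_even (?w \<tau>))) \<le> card Inc div 2" .
  qed
  have dg1: "degree g1 \<le> card Inc div 2"
    unfolding g1_def
  proof (rule degree_sum_le[OF finite_VO])
    fix \<tau> assume t: "\<tau> \<in> VO"
    have "degree (smult (of_int (lsign (Alist @ Blist) \<tau> * (-1) ^ e \<tau>)) (Gpoly_odd (?w \<tau>))) \<le> degree (Gpoly_odd (?w \<tau>))"
      by (rule degree_smult_le)
    also have "\<dots> \<le> ?w \<tau> div 2" by (rule Gpoly_odd_degree)
    also have "\<dots> \<le> card Inc div 2" using v_le[OF t] by (rule div_le_mono)
    finally show "degree (smult (of_int (lsign (Alist @ Blist) \<tau> * (-1) ^ e \<tau>)) (Gpoly_odd (?w \<tau>))) \<le> card Inc div 2" .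
  qed
  have ev: "\<forall>k::nat. even k \<longrightarrow> of_int (L_minus le0 m0 (m(i0 := k))) = poly g0 (of_nat k)"
  proof (intro allI impI)
    fix k :: nat assume k: "even k"
    have p: "\<And>\<tau>. (-1::int) ^ (k * (length Alist + length (uL Los \<tau>))) = 1" using k by (simp add: power_mult)
    have "L_minus le0 m0 (m(i0 := k)) = (\<Sum>\<tau>\<in>VO. lsign (Alist @ Blist) \<tau> * Gf (?w \<tau>) k)"
      unfolding L_minus_eq using p by simp
    then have "of_int (L_minus le0 m0 (m(i0 := k))) = (\<Sum>\<tau>\<in>VO. (of_int (lsign (Alist @ Blist) \<tau> * Gf (?w \<tau>) k) :: rat))"
      by (simp add: of_int_sum)
    also have "\<dots> = poly g0 (of_nat k)"
      unfolding g0_def poly_sum using Gpoly_even_eval[OF k] by simp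
    finally show "of_int (L_minus le0 m0 (m(i0 := k))) = poly g0 (of_nat k)" .
  qed
  have od: "\<forall>k::nat. odd k \<longrightarrow> of_int (L_minus le0 m0 (m(i0 := k))) = poly g1 (of_nat k)"
  proof (intro allI impI)
    fix k :: nat assume k: "odd k"
    have p: "\<And>\<tau>. (-1::int) ^ (k * (length Alist + length (uL Los \<tau>))) = (-1) ^ e \<tau>" using k unfolding e_def by (simp add: power_mult)
    have "L_minus le0 m0 (m(i0 := k)) = (\<Sum>\<tau>\<in>VO. lsign (Alist @ Blist) \<tau> * (-1) ^ e \<tau> * Gf (?w \<tau>) k)"
      unfolding L_minus_eq using p by simp
    then have "of_int (L_minus le0 m0 (m(i0 := k))) = (\<Sum>\<tau>\<in>VO. (of_int (lsign (Alist @ Blist) \<tau> * (-1) ^ e \<tau> * Gf (?w \<tau>) k) :: rat))"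
      by (simp add: of_int_sum)
    also have "\<dots> = poly g1 (of_nat k)"
      unfolding g1_def poly_sum using Gpoly_odd_eval[OF k] by simp
    finally show "of_int (L_minus le0 m0 (m(i0 := k))) = poly g1 (of_nat k)" .
  qed
  show "\<exists>(g0 :: rat poly) (g1 :: rat poly). degree g0 \<le> card Inc div 2 \<and> degree g1 \<le> card Inc div 2 \<and>
            (\<forall>k::nat. even k \<longrightarrow> of_int (L_minus le0 m0 (m(i0 := k))) = poly g0 (of_nat k)) \<and>
            (\<forall>k::nat. odd k \<longrightarrow> of_int (L_minus le0 m0 (m(i0 := k))) = poly g1 (of_nat k))"
    using dg0 dg1 ev od by blast
qed

end

theorem proposition5p1:
  fixes le0 :: "nat \<Rightarrow> nat \<Rightarrow> bool" and m0 i0 :: nat and m :: "nat \<Rightarrow> nat"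
  assumes refl: "\<And>x. x \<in> {1..m0} \<Longrightarrow> le0 x x"
    and antisym: "\<And>x y. x \<in> {1..m0} \<Longrightarrow> y \<in> {1..m0} \<Longrightarrow> le0 x y \<Longrightarrow> le0 y x \<Longrightarrow> x = y"
    and trans: "\<And>x y z. x \<in> {1..m0} \<Longrightarrow> y \<in> {1..m0} \<Longrightarrow> z \<in> {1..m0} \<Longrightarrow>
                  le0 x y \<Longrightarrow> le0 y z \<Longrightarrow> le0 x z"
    and i0: "i0 \<in> {1..m0}"
  defines "D \<equiv> (\<Sum>i\<in>{i\<in>{1..m0}. i \<noteq> i0 \<and> \<not> le0 i i0 \<and> \<not> le0 i0 i}. m i)"
  shows "(\<exists>f :: rat poly. degree f = D \<and>
            (\<forall>k::nat. of_nat (L_plus le0 m0 (m(i0 := k))) = poly f (of_nat k)))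
       \<and> (\<exists>(g0 :: rat poly) (g1 :: rat poly). degree g0 \<le> D div 2 \<and> degree g1 \<le> D div 2 \<and>
            (\<forall>k::nat. even k \<longrightarrow> of_int (L_minus le0 m0 (m(i0 := k))) = poly g0 (of_nat k)) \<and>
            (\<forall>k::nat. odd k \<longrightarrow> of_int (L_minus le0 m0 (m(i0 := k))) = poly g1 (of_nat k)))"
proof -
  interpret S: setting le0 m0 i0 m by (rule setting.intro[OF refl antisym trans i0])
  have "D = card S.Inc" unfolding D_def by (rule S.D_card)
  then show ?thesis using S.main by simp
qed


end
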